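(* Let $\mathcal{N}$ be a net of quadrics in $\mathbb{P}^3$ whose discriminant quartic satisfies $\Delta(\mathcal{N})\subsetneq\mathbb{P}^2$. Then: (1) if $\Delta(\mathcal{N})$ is reduced and GIT unstable, then either it has a singular point of multiplicity at least three, or it consists of a cubic and an inflectional tangent line; (2) if $\Delta(\mathcal{N})$ is GIT unstable and not reduced, then it is not a double smooth conic. In particular, if $\Delta(\mathcal{N})$ is GIT semistable, then so is $\mathcal{N}$.
   Context: $\Delta(\mathcal{N})\subset|\mathcal{N}|\cong\mathbb{P}^2$ is the subscheme defined by $\det(\lambda A_1+\mu A_2+\nu A_3)=0$, where $A_1,A_2,A_3$ are symmetric $4\times4$ matrices representing three generators of $\mathcal{N}$. GIT stability of plane quartics refers to the $\mathrm{SL}(3)$-action on $\mathbb{P}(H^0(\mathbb{P}^2,\mathcal{O}(4)))$; GIT stability of $\mathcal{N}$ refers to the $\mathrm{SL}(4)$-action on the Plücker-embedded Grassmannian of nets of quadrics in $\mathbb{P}^3$. *)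

theory Defs
  imports "HOL-Analysis.Analysis" "HOL-Computational_Algebra.Polynomial"
begin

definition cvec :: "complex \<Rightarrow> complex^'n \<Rightarrow> complex^'n" where
  "cvec c v = (\<chi> i. c * v $ i)"

definition cmat :: "complex \<Rightarrow> complex^'n^'m \<Rightarrow> complex^'n^'m" where
  "cmat c A = (\<chi> i j. c * A $ i $ j)"

text \<open>Homogeneous forms of degree d on C^3, represented as polynomial functions
  (the field C is infinite, so functions and polynomials correspond).\<close>
definition ternary_form :: "nat \<Rightarrow> (complex^3 \<Rightarrow> complex) \<Rightarrow> bool" where
  "ternary_form d f \<longleftrightarrow> (\<exists>c :: nat \<Rightarrow> nat \<Rightarrow> complex. \<forall>x.
      f x = (\<Sum>a\<le>d. \<Sum>b\<le>d - a. c a b * x$1 ^ a * x$2 ^ b * x$3 ^ (d - a - b)))"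

text \<open>The point [p] of P^2 (p nonzero) has multiplicity at least m on the curve f = 0:
  along every line through p the restriction of f vanishes to order at least m.\<close>
definition mult_ge :: "(complex^3 \<Rightarrow> complex) \<Rightarrow> complex^3 \<Rightarrow> nat \<Rightarrow> bool" where
  "mult_ge f p m \<longleftrightarrow> (\<forall>x. \<exists>q :: complex poly. \<forall>t. f (p + cvec t x) = t ^ m * poly q t)"

definition reduced_form :: "nat \<Rightarrow> (complex^3 \<Rightarrow> complex) \<Rightarrow> bool" where
  "reduced_form n f \<longleftrightarrow> \<not> (\<exists>d G H. 1 \<le> d \<and> 2 * d \<le> n \<and> ternary_form d G \<and> G \<noteq> (\<lambda>_. 0)
      \<and> ternary_form (n - 2 * d) H \<and> (\<forall>x. f x = (G x)^2 * H x))"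

definition smooth_curve :: "(complex^3 \<Rightarrow> complex) \<Rightarrow> bool" where
  "smooth_curve f \<longleftrightarrow> (\<forall>p. p \<noteq> 0 \<longrightarrow> \<not> mult_ge f p 2)"

definition has_triple_point :: "(complex^3 \<Rightarrow> complex) \<Rightarrow> bool" where
  "has_triple_point f \<longleftrightarrow> (\<exists>p. p \<noteq> 0 \<and> mult_ge f p 3)"

text \<open>The line L = 0 is an inflectional tangent line of the cubic C = 0:
  it meets C only at a smooth point [p] of C, with intersection multiplicity 3.\<close>
definition inflectional_tangent :: "(complex^3 \<Rightarrow> complex) \<Rightarrow> (complex^3 \<Rightarrow> complex) \<Rightarrow> bool" where
  "inflectional_tangent L C \<longleftrightarrow> (\<exists>p q a. (\<forall>a b. cvec a p + cvec b q = 0 \<longrightarrow> a = 0 \<and> b = 0) \<and> L p = 0 \<and> L q = 0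
      \<and> a \<noteq> 0 \<and> (\<forall>s t. C (cvec s p + cvec t q) = a * t ^ 3) \<and> \<not> mult_ge C p 2)"

definition cubic_plus_inflectional_line :: "(complex^3 \<Rightarrow> complex) \<Rightarrow> bool" where
  "cubic_plus_inflectional_line f \<longleftrightarrow> (\<exists>L C. ternary_form 1 L \<and> L \<noteq> (\<lambda>_. 0) \<and> ternary_form 3 C
      \<and> (\<forall>x. f x = L x * C x) \<and> inflectional_tangent L C)"

definition double_smooth_conic :: "(complex^3 \<Rightarrow> complex) \<Rightarrow> bool" where
  "double_smooth_conic f \<longleftrightarrow> (\<exists>Q. ternary_form 2 Q \<and> smooth_curve Q \<and> (\<forall>x. f x = (Q x)^2))"

text \<open>GIT (in)stability of a plane quartic F (nonzero) under SL(3): F is unstable iff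
  0 lies in the closure of its SL(3)-orbit in the space of quartic forms (convergence of
  forms is equivalent to pointwise convergence).\<close>
definition quartic_unstable :: "(complex^3 \<Rightarrow> complex) \<Rightarrow> bool" where
  "quartic_unstable F \<longleftrightarrow> (\<exists>g :: nat \<Rightarrow> complex^3^3. (\<forall>n. det (g n) = 1)
      \<and> (\<forall>x. (\<lambda>n. F (g n *v x)) \<longlonglongrightarrow> 0))"

definition quartic_semistable :: "(complex^3 \<Rightarrow> complex) \<Rightarrow> bool" where
  "quartic_semistable F \<longleftrightarrow> \<not> quartic_unstable F"

definition net_discriminant :: "complex^4^4 \<Rightarrow> complex^4^4 \<Rightarrow> complex^4^4 \<Rightarrow> complex^3 \<Rightarrow> complex" where
  "net_discriminant A1 A2 A3 x = det (cmat (x$1) A1 + cmat (x$2) A2 + cmat (x$3) A3)"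

text \<open>Plucker coordinates of the net: 3x3 minors of the 3 x 10 coefficient matrix
  (columns indexed by entries (i,j); repeated/transposed columns only add duplicates or zeros).\<close>
definition plucker :: "complex^4^4 \<Rightarrow> complex^4^4 \<Rightarrow> complex^4^4
    \<Rightarrow> (4 \<times> 4) \<Rightarrow> (4 \<times> 4) \<Rightarrow> (4 \<times> 4) \<Rightarrow> complex" where
  "plucker A1 A2 A3 e1 e2 e3 =
     (let m = (\<lambda>A (e :: 4 \<times> 4). A $ fst e $ snd e) in
       m A1 e1 * (m A2 e2 * m A3 e3 - m A2 e3 * m A3 e2)
     - m A1 e2 * (m A2 e1 * m A3 e3 - m A2 e3 * m A3 e1)
     + m A1 e3 * (m A2 e1 * m A3 e2 - m A2 e2 * m A3 e1))"

definition quad_act :: "complex^4^4 \<Rightarrow> complex^4^4 \<Rightarrow> complex^4^4" where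
  "quad_act g A = transpose g ** A ** g"

text \<open>GIT instability of the net under SL(4) in the Plucker embedding: 0 lies in the
  closure of the SL(4)-orbit of the Plucker vector.\<close>
definition net_unstable :: "complex^4^4 \<Rightarrow> complex^4^4 \<Rightarrow> complex^4^4 \<Rightarrow> bool" where
  "net_unstable A1 A2 A3 \<longleftrightarrow> (\<exists>g :: nat \<Rightarrow> complex^4^4. (\<forall>n. det (g n) = 1)
      \<and> (\<forall>e1 e2 e3. (\<lambda>n. plucker (quad_act (g n) A1) (quad_act (g n) A2) (quad_act (g n) A3) e1 e2 e3)
            \<longlonglongrightarrow> 0))"

definition net_semistable :: "complex^4^4 \<Rightarrow> complex^4^4 \<Rightarrow> complex^4^4 \<Rightarrow> bool" where
  "net_semistable A1 A2 A3 \<longleftrightarrow> \<not> net_unstable A1 A2 A3"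

end

theory Submission
  imports Defs
begin


definition mono :: "(3 \<Rightarrow> nat) \<Rightarrow> complex^3 \<Rightarrow> complex" where
  "mono e x = (\<Prod>i\<in>UNIV. x$i ^ e i)"
definition Exps :: "nat \<Rightarrow> (3 \<Rightarrow> nat) set" where
  "Exps d = {e. sum e UNIV = d}"
definition form :: "nat \<Rightarrow> (complex^3 \<Rightarrow> complex) \<Rightarrow> bool" where
  "form d f \<longleftrightarrow> (\<exists>c. \<forall>x. f x = (\<Sum>e\<in>Exps d. c e * mono e x))"

lemma prod3: "prod f (UNIV::3 set) = f 1 * f 2 * f 3"
  unfolding UNIV_3 by (simp add: mult.assoc)

lemma Exps_le: "e \<in> Exps d \<Longrightarrow> e i \<le> d"
  unfolding Exps_def using member_le_sum[of i UNIV e] by simp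

lemma Exps_sub: "Exps d \<subseteq> PiE UNIV (\<lambda>_. {..d})"
  using Exps_le by (auto simp: PiE_def extensional_def)

lemma finite_Exps[simp]: "finite (Exps d)"
  
  apply (rule finite_subset[OF Exps_sub])
  apply (rule finite_PiE)
  apply simp
  apply simp
  done

lemma mono_add: "mono (\<lambda>i. e i + e' i) x = mono e x * mono e' x"
  unfolding mono_def by (simp add: power_add prod.distrib)

lemma mono_scale: "mono e (\<chi> i. a$i * x$i) = mono e a * mono e x"
  unfolding mono_def by (simp add: power_mult_distrib prod.distrib)

lemma Exps_add: "e \<in> Exps d \<Longrightarrow> e' \<in> Exps d' \<Longrightarrow> (\<lambda>i. e i + e' i) \<in> Exps (d+d')"
  unfolding Exps_def by (simp add: sum.distrib)

lemma form_zero: "form d (\<lambda>_. 0)"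
  unfolding form_def by (rule exI[of _ "\<lambda>_. 0"]) simp

lemma form_add: "form d f \<Longrightarrow> form d g \<Longrightarrow> form d (\<lambda>x. f x + g x)"
  unfolding form_def
proof (elim exE)
  fix c1 c2 assume "\<forall>x. f x = (\<Sum>e\<in>Exps d. c1 e * mono e x)" "\<forall>x. g x = (\<Sum>e\<in>Exps d. c2 e * mono e x)"
  then show "\<exists>c. \<forall>x. f x + g x = (\<Sum>e\<in>Exps d. c e * mono e x)"
    by (intro exI[of _ "\<lambda>e. c1 e + c2 e"]) (simp add: sum.distrib distrib_right)
qed

lemma form_cmult: "form d f \<Longrightarrow> form d (\<lambda>x. k * f x)"
  unfolding form_def
proof (elim exE)
  fix c1 assume "\<forall>x. f x = (\<Sum>e\<in>Exps d. c1 e * mono e x)"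
  then show "\<exists>c. \<forall>x. k * f x = (\<Sum>e\<in>Exps d. c e * mono e x)"
    by (intro exI[of _ "\<lambda>e. k * c1 e"]) (simp add: sum_distrib_left mult.assoc)
qed

lemma form_sum: "finite I \<Longrightarrow> (\<And>i. i \<in> I \<Longrightarrow> form d (f i)) \<Longrightarrow> form d (\<lambda>x. \<Sum>i\<in>I. f i x)"
proof (induction I rule: finite_induct)
  case empty then show ?case using form_zero by simp
next
  case (insert a I)
  then show ?case using form_add[of d "f a" "\<lambda>x. \<Sum>i\<in>I. f i x"] by simp
qed

lemma Exps_0: "Exps 0 = {(\<lambda>_. 0)}"
proof -
  have *: "sum e UNIV = (0::nat) \<longleftrightarrow> e = (\<lambda>_. 0)" for e :: "3 \<Rightarrow> nat"
    by (simp add: fun_eq_iff)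
  show ?thesis unfolding Exps_def by (simp only: set_eq_iff mem_Collect_eq * singleton_iff) simp
qed

lemma form_one: "form 0 (\<lambda>_. 1)"
  unfolding form_def Exps_0 by (intro exI[of _ "\<lambda>_. 1"]) (simp add: mono_def)

lemma form_mult:
  assumes "form d f" "form d' g" shows "form (d+d') (\<lambda>x. f x * g x)"
proof -
  obtain c1 where c1: "\<forall>x. f x = (\<Sum>e\<in>Exps d. c1 e * mono e x)" using assms(1) unfolding form_def by blast
  obtain c2 where c2: "\<forall>x. g x = (\<Sum>e\<in>Exps d'. c2 e * mono e x)" using assms(2) unfolding form_def by blast
  define S where "S = Exps d \<times> Exps d'"
  define h where "h = (\<lambda>p::(3\<Rightarrow>nat)\<times>(3\<Rightarrow>nat). (\<lambda>i. fst p i + snd p i))"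
  define c where "c = (\<lambda>e. \<Sum>p\<in>{p\<in>S. h p = e}. c1 (fst p) * c2 (snd p))"
  have fin: "finite S" unfolding S_def by simp
  have hS: "h ` S \<subseteq> Exps (d+d')" unfolding S_def h_def using Exps_add by auto
  show ?thesis unfolding form_def
  proof (intro exI[of _ c] allI)
    fix x
    have "f x * g x = (\<Sum>p\<in>S. c1 (fst p) * c2 (snd p) * mono (h p) x)"
      unfolding c1[rule_format] c2[rule_format] S_def h_def sum_product sum.cartesian_product
      by (intro sum.cong) (auto simp: mono_add)
    also have "\<dots> = (\<Sum>e\<in>Exps (d+d'). \<Sum>p\<in>{p\<in>S. h p = e}. c1 (fst p) * c2 (snd p) * mono (h p) x)"
      by (rule sum.group[symmetric, OF fin _ hS]) simp
    also have "\<dots> = (\<Sum>e\<in>Exps (d+d'). c e * mono e x)"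
      unfolding c_def sum_distrib_right by (intro sum.cong refl) auto
    finally show "f x * g x = (\<Sum>e\<in>Exps (d+d'). c e * mono e x)" .
  qed
qed

lemma form_prod: "finite I \<Longrightarrow> (\<And>i. i \<in> I \<Longrightarrow> form (dg i) (f i)) \<Longrightarrow> form (\<Sum>i\<in>I. dg i) (\<lambda>x. \<Prod>i\<in>I. f i x)"
proof (induction I rule: finite_induct)
  case empty then show ?case using form_one by simp
next
  case (insert a I)
  then show ?case using form_mult[of "dg a" "f a" "sum dg I" "\<lambda>x. \<Prod>i\<in>I. f i x"] by simp
qed

lemma form_pow: "form d f \<Longrightarrow> form (n*d) (\<lambda>x. f x ^ n)"
proof (induction n)
  case 0 then show ?case using form_one by simp
next
  case (Suc n) then show ?case using form_mult[of d f "n*d" "\<lambda>x. f x ^ n"] by simp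
qed

definition unitv :: "3 \<Rightarrow> (3 \<Rightarrow> nat)" where "unitv i = (\<lambda>j. if j = i then 1 else 0)"

lemma unitv_Exps: "unitv i \<in> Exps 1"
  unfolding Exps_def unitv_def by simp

lemma mono_unitv: "mono (unitv i) x = x$i"
proof -
  have "mono (unitv i) x = (\<Prod>j\<in>UNIV. if j = i then x$j else 1)"
    unfolding mono_def unitv_def by (intro prod.cong) auto
  then show ?thesis by simp
qed

lemma form_coord: "form 1 (\<lambda>x. x$i)"
  unfolding form_def
proof (intro exI[of _ "\<lambda>e. if e = unitv i then 1 else 0"] allI)
  fix x
  show "x $ i = (\<Sum>e\<in>Exps 1. (if e = unitv i then 1 else 0) * mono e x)"
  proof -
    have "(\<Sum>e\<in>Exps 1. (if e = unitv i then 1 else 0) * mono e x) = (\<Sum>e\<in>Exps 1. if e = unitv i then mono e x else 0)"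
      by (rule sum.cong) auto
    then show ?thesis using unitv_Exps[of i] by (simp add: mono_unitv)
  qed
qed

lemma form_lin: "form 1 (\<lambda>x. \<Sum>j\<in>UNIV. m j * x$j)"
  by (intro form_sum form_cmult form_coord) simp

lemma form_mono: "e \<in> Exps d \<Longrightarrow> form d (mono e)"
proof -
  assume e: "e \<in> Exps d"
  have "form (\<Sum>i\<in>UNIV. e i * 1) (\<lambda>x. \<Prod>i\<in>UNIV. x$i ^ e i)"
    by (intro form_prod form_pow form_coord) simp
  then show ?thesis using e unfolding Exps_def mono_def[abs_def] by simp
qed

lemma form_subst: assumes "form d f" shows "form d (\<lambda>x. f (M *v x))"
proof -
  obtain c where c: "\<forall>x. f x = (\<Sum>e\<in>Exps d. c e * mono e x)" using assms unfolding form_def by blast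
  have m: "form d (\<lambda>x. mono e (M *v x))" if e: "e \<in> Exps d" for e
  proof -
    have "form (\<Sum>i\<in>UNIV. e i * 1) (\<lambda>x. \<Prod>i\<in>UNIV. (\<Sum>j\<in>UNIV. M$i$j * x$j) ^ e i)"
      by (intro form_prod form_pow form_lin) simp
    then show ?thesis using e unfolding Exps_def mono_def by (simp add: matrix_vector_mult_def)
  qed
  have "form d (\<lambda>x. \<Sum>e\<in>Exps d. c e * mono e (M *v x))"
    by (intro form_sum form_cmult m) auto
  then show ?thesis using c by simp
qed

lemma form_continuous: assumes "form d f" "(y \<longlongrightarrow> y0) F" shows "((\<lambda>n. f (y n)) \<longlongrightarrow> f y0) F"
proof -
  obtain c where c: "\<forall>x. f x = (\<Sum>e\<in>Exps d. c e * mono e x)" using assms unfolding form_def by blast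
  show ?thesis unfolding c[rule_format] mono_def
    by (intro tendsto_intros tendsto_vec_nth assms(2))
qed

definition mk3 :: "nat \<Rightarrow> nat \<Rightarrow> nat \<Rightarrow> 3 \<Rightarrow> nat" where
  "mk3 a b l = (\<lambda>i. if i = 1 then a else if i = 2 then b else l)"

lemma mono_mk3: "mono (mk3 a b l) x = x$1^a * x$2^b * x$3^l"
  unfolding mono_def mk3_def prod3 by simp

lemma mk3_simps[simp]: "mk3 a b l 1 = a" "mk3 a b l 2 = b" "mk3 a b l 3 = l"
  by (auto simp: mk3_def)

lemma sum_Exps: "(\<Sum>e\<in>Exps d. g e) = (\<Sum>a\<le>d. \<Sum>b\<le>d-a. g (mk3 a b (d-a-b)))"
proof -
  have "(\<Sum>a\<le>d. \<Sum>b\<le>d-a. g (mk3 a b (d-a-b))) = (\<Sum>p\<in>Sigma {..d} (\<lambda>a. {..d-a}). g (mk3 (fst p) (snd p) (d - fst p - snd p)))"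
    by (simp add: sum.Sigma split_def)
  also have "\<dots> = (\<Sum>e\<in>Exps d. g e)"
  proof (rule sum.reindex_bij_witness[of _ "\<lambda>e. (e 1, e 2)" "\<lambda>p. mk3 (fst p) (snd p) (d - fst p - snd p)"])
    fix e assume e: "e \<in> Exps d"
    then have s: "e 1 + e 2 + e 3 = d" unfolding Exps_def by (simp add: sum_3)
    show "mk3 (fst (e 1, e 2)) (snd (e 1, e 2)) (d - fst (e 1, e 2) - snd (e 1, e 2)) = e"
    proof (rule ext)
      fix i :: 3
      have "i = 1 \<or> i = 2 \<or> i = 3" by (rule exhaust_3)
      then show "mk3 (fst (e 1, e 2)) (snd (e 1, e 2)) (d - fst (e 1, e 2) - snd (e 1, e 2)) i = e i"
        using s by (elim disjE) simp_all
    qed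
    show "(e 1, e 2) \<in> Sigma {..d} (\<lambda>a. {..d - a})" using s by auto
  next
    fix p assume p: "p \<in> Sigma {..d} (\<lambda>a. {..d - a})"
    then show "(mk3 (fst p) (snd p) (d - fst p - snd p) 1, mk3 (fst p) (snd p) (d - fst p - snd p) 2) = p"
      by (auto simp: mk3_def)
    show "mk3 (fst p) (snd p) (d - fst p - snd p) \<in> Exps d"
      using p by (auto simp: mk3_def Exps_def sum_3)
  qed simp
  finally show ?thesis by simp
qed

lemma ternary_form_iff: "ternary_form d f \<longleftrightarrow> form d f"
proof
  assume "ternary_form d f"
  then obtain c where c: "\<forall>x. f x = (\<Sum>a\<le>d. \<Sum>b\<le>d - a. c a b * x$1 ^ a * x$2 ^ b * x$3 ^ (d - a - b))"
    unfolding ternary_form_def by blast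
  show "form d f" unfolding form_def
    by (intro exI[of _ "\<lambda>e. c (e 1) (e 2)"]) (simp add: sum_Exps c mono_mk3 mult.assoc)
next
  assume "form d f"
  then obtain c where c: "\<forall>x. f x = (\<Sum>e\<in>Exps d. c e * mono e x)" unfolding form_def by blast
  show "ternary_form d f" unfolding ternary_form_def
    by (intro exI[of _ "\<lambda>a b. c (mk3 a b (d-a-b))"]) (simp add: sum_Exps c mono_mk3 mult.assoc)
qed


definition w5 :: complex where "w5 = exp (2 * pi * \<i> / 5)"

lemma w5_pow: "w5 ^ m = exp (of_nat m * (2 * pi * \<i> / 5))"
  unfolding w5_def by (rule exp_of_nat_mult[symmetric])

lemma w5_5: "w5 ^ 5 = 1"
proof -
  have "w5 ^ 5 = exp (of_nat 5 * (2 * pi * \<i> / 5))" by (rule w5_pow)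
  also have "\<dots> = exp (2 * complex_of_real pi * \<i>)" by (rule arg_cong[where f=exp]) simp
  finally show ?thesis using exp_two_pi_i by simp
qed

lemma w5_pow_eq_1: "w5 ^ m = 1 \<longleftrightarrow> 5 dvd m"
proof
  assume "w5 ^ m = 1"
  then obtain n::int where n: "Im (of_nat m * (2 * pi * \<i> / 5)) = of_int (2*n) * pi"
    using exp_eq_1 w5_pow by metis
  then have "real m * 2 * pi / 5 = 2 * real_of_int n * pi" by simp
  then have "real m = 5 * real_of_int n" using pi_gt_zero by (simp add: field_simps)
  then have "int m = 5 * n" by linarith
  then show "5 dvd m" by presburger
next
  assume "5 dvd m" then obtain k where "m = 5*k" by auto
  then have "w5 ^ m = (w5^5)^k" by (simp add: power_mult)
  then show "w5 ^ m = 1" using w5_5 by simp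
qed

lemma sum_w5: "(\<Sum>a<5. w5^(a*m)) = (if 5 dvd m then 5 else 0)"
proof (cases "5 dvd m")
  case True
  then have "w5^(a*m) = 1" for a using w5_pow_eq_1[of m] by (simp add: power_mult mult.commute[of a] )
  then show ?thesis using True by simp
next
  case False
  define z where "z = w5^m"
  have z1: "z \<noteq> 1" using False w5_pow_eq_1 unfolding z_def by simp
  have z5: "z^5 = 1" unfolding z_def by (metis power_mult power_mult_distrib w5_5 mult.commute power_one)
  have "w5^(a*m) = z^a" for a unfolding z_def by (simp add: power_mult[symmetric] mult.commute)
  then have "(\<Sum>a<5. w5^(a*m)) = (\<Sum>a<5. z^a)" by simp
  also have "\<dots> = 0" using geometric_sum[OF z1, of 5] z5 by simp
  finally show ?thesis using False by simp
qed

definition pts :: "(3 \<Rightarrow> nat) set" where "pts = PiE UNIV (\<lambda>_. {..<5})"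

definition coef :: "(complex^3 \<Rightarrow> complex) \<Rightarrow> (3 \<Rightarrow> nat) \<Rightarrow> complex" where
  "coef f e = (\<Sum>k\<in>pts. f (\<chi> i. w5^(k i)) * (\<Prod>i\<in>UNIV. w5^(k i * (5 - e i)))) / 125"

lemma finite_pts[simp]: "finite pts"
  unfolding pts_def by (rule finite_PiE) simp_all

lemma dvd5_iff: "(x::nat) \<le> 4 \<Longrightarrow> y \<le> 4 \<Longrightarrow> 5 dvd (x + (5 - y)) \<longleftrightarrow> x = y"
  by presburger

lemma coef_unique:
  assumes f: "\<And>x. f x = (\<Sum>e'\<in>Exps 4. c e' * mono e' x)" and e: "e \<in> Exps 4"
  shows "coef f e = c e"
proof -
  define pt where "pt k = (\<chi> i. w5^(k i))" for k :: "3 \<Rightarrow> nat"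
  define W where "W k = (\<Prod>i\<in>UNIV. w5^(k i * (5 - e i)))" for k :: "3 \<Rightarrow> nat"
  have inner: "(\<Sum>k\<in>pts. mono e' (pt k) * W k) = (if e' = e then 125 else 0)" if e': "e' \<in> Exps 4" for e'
  proof -
    have "(\<Sum>k\<in>pts. mono e' (pt k) * W k) = (\<Sum>k\<in>pts. \<Prod>i\<in>UNIV. w5^(k i * (e' i + (5 - e i))))"
    proof (intro sum.cong refl)
      fix k
      have "mono e' (pt k) * W k = (\<Prod>i\<in>UNIV. w5^(k i * e' i) * w5^(k i * (5 - e i)))"
        unfolding mono_def W_def pt_def by (simp add: prod.distrib power_mult)
      also have "\<dots> = (\<Prod>i\<in>UNIV. w5^(k i * (e' i + (5 - e i))))"
        by (simp add: power_add[symmetric] distrib_left)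
      finally show "mono e' (pt k) * W k = (\<Prod>i\<in>UNIV. w5^(k i * (e' i + (5 - e i))))" .
    qed
    also have "\<dots> = (\<Prod>i\<in>UNIV. \<Sum>a\<in>{..<5}. w5^(a * (e' i + (5 - e i))))"
      unfolding pts_def by (rule prod_sum_PiE[symmetric]) simp_all
    also have "\<dots> = (\<Prod>i\<in>UNIV. if e' i = e i then 5 else 0)"
    proof (intro prod.cong refl)
      fix i
      have "e' i \<le> 4" "e i \<le> 4" using Exps_le e e' by auto
      then show "(\<Sum>a\<in>{..<5}. w5^(a * (e' i + (5 - e i)))) = (if e' i = e i then 5 else 0)"
        using sum_w5[of "e' i + (5 - e i)"] dvd5_iff by simp
    qed
    also have "\<dots> = (if e' = e then 125 else 0)"
    proof (cases "e' = e")
      case True then show ?thesis by simp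
    next
      case False
      then obtain i where "e' i \<noteq> e i" by auto
      then have "(\<Prod>i\<in>UNIV. if e' i = e i then (5::complex) else 0) = 0"
        by (intro prod_zero) auto
      then show ?thesis using False by simp
    qed
    finally show ?thesis .
  qed
  have "(\<Sum>k\<in>pts. f (pt k) * W k) = (\<Sum>k\<in>pts. \<Sum>e'\<in>Exps 4. c e' * (mono e' (pt k) * W k))"
    unfolding f by (simp add: sum_distrib_right mult.assoc)
  also have "\<dots> = (\<Sum>e'\<in>Exps 4. c e' * (\<Sum>k\<in>pts. mono e' (pt k) * W k))"
    by (subst sum.swap) (simp add: sum_distrib_left)
  also have "\<dots> = (\<Sum>e'\<in>Exps 4. if e' = e then c e' * 125 else 0)"
    by (intro sum.cong refl) (simp add: inner)
  also have "\<dots> = c e * 125" using e by simp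
  finally have S: "(\<Sum>k\<in>pts. f (pt k) * W k) = c e * 125" .
  have "coef f e = (\<Sum>k\<in>pts. f (pt k) * W k) / 125" unfolding coef_def pt_def W_def by simp
  then show ?thesis unfolding S by simp
qed

lemma form4_repr: assumes "form 4 f" shows "f x = (\<Sum>e\<in>Exps 4. coef f e * mono e x)"
proof -
  obtain c where c: "\<forall>x. f x = (\<Sum>e\<in>Exps 4. c e * mono e x)" using assms unfolding form_def by blast
  have "coef f e = c e" if "e \<in> Exps 4" for e using coef_unique[of f c e] c that by simp
  then show ?thesis using c by simp
qed

lemma coef_tendsto:
  assumes "\<And>x. ((\<lambda>n. f n x) \<longlongrightarrow> g x) F"
  shows "((\<lambda>n. coef (f n) e) \<longlongrightarrow> coef g e) F"
  unfolding coef_def by (intro tendsto_intros assms) simp_all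

lemma coef_zero: "coef (\<lambda>_. 0) e = 0"
  unfolding coef_def by simp


definition diagm :: "complex^3 \<Rightarrow> complex^3^3" where
  "diagm d = (\<chi> i j. if i = j then d$i else 0)"

lemma diagm_mult: "K ** diagm d = (\<chi> i j. K$i$j * d$j)"
proof -
  have "(\<Sum>k\<in>UNIV. K$i$k * (if k = j then d$k else 0)) = K$i$j * d$j" for i j
  proof -
    have "(\<Sum>k\<in>UNIV. K$i$k * (if k = j then d$k else 0)) = (\<Sum>k\<in>UNIV. if k = j then K$i$k * d$k else 0)"
      by (intro sum.cong) auto
    then show ?thesis by simp
  qed
  then show ?thesis by (simp add: matrix_matrix_mult_def diagm_def vec_eq_iff)
qed

lemma cols_mult: "g ** (\<chi> i j. w j $ i) = (\<chi> i j. (g *v w j) $ i)"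
  by (simp add: matrix_matrix_mult_def matrix_vector_mult_def vec_eq_iff)

lemma ker_triv: fixes g :: "complex^3^3" assumes "det g \<noteq> 0" "g *v x = 0" shows "x = 0"
proof -
  have "invertible g" using assms(1) invertible_det_nz by blast
  then obtain B where "B ** g = mat 1" using invertible_left_inverse by blast
  then show ?thesis using matrix_left_invertible_ker assms(2) by blast
qed

lemma finite_argmax: fixes f :: "'a::finite \<Rightarrow> real" shows "\<exists>x. \<forall>y. f y \<le> f x"
proof -
  have "Max (range f) \<in> range f" by (rule Max_in) auto
  then obtain x where "Max (range f) = f x" by blast
  moreover have "f y \<le> Max (range f)" for y by (rule Max_ge) auto
  ultimately show ?thesis by auto
qed

lemma other2: "\<exists>b c. distinct [a::3, b, c]"
  using exhaust_3[of a]
  by (elim disjE) (rule exI[of _ 2], rule exI[of _ 3], simp, rule exI[of _ 1], rule exI[of _ 3], simp, rule exI[of _ 1], rule exI[of _ 2], simp)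

lemma distinct3_all: "distinct [a::3, b, c] \<Longrightarrow> i = a \<or> i = b \<or> i = c"
  using exhaust_3[of a] exhaust_3[of b] exhaust_3[of c] exhaust_3[of i] by auto

lemma det_tri1: fixes K :: "complex^3^3"
  assumes "distinct [p,p2,p3]" "K$p$1 = 1" "K$p$2 = 0" "K$p$3 = 0" "K$p2$2 = 1" "K$p2$3 = 0" "K$p3$3 = 1"
  shows "cmod (det K) = 1"
  using assms exhaust_3[of p] exhaust_3[of p2] exhaust_3[of p3] by (auto simp: det_3)

lemma det_tri2: fixes H :: "complex^3^3"
  assumes "distinct [q,c2,c3]" "H$q$1 = 1" "H$c2$1 = 0" "H$c3$1 = 0" "H$c2$2 = 1" "H$c3$2 = 0" "H$c3$3 = 1"
  shows "cmod (det H) = 1"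
  using assms exhaust_3[of q] exhaust_3[of c2] exhaust_3[of c3] by (auto simp: det_3)

lemma lu3:
  fixes g :: "complex^3^3"
  assumes dg: "det g \<noteq> 0"
  shows "\<exists>K H d. g ** H = K ** diagm d \<and> (\<forall>i j. cmod (K$i$j) \<le> 1) \<and> cmod (det K) = 1
           \<and> (\<forall>i j. cmod (H$i$j) \<le> 2) \<and> cmod (det H) = 1"
proof -
  obtain pq where pq: "\<forall>y. (\<lambda>(i,j). cmod (g$i$j)) y \<le> (\<lambda>(i,j). cmod (g$i$j)) pq"
    using finite_argmax[of "\<lambda>(i,j). cmod (g$i$j)"] by blast
  define p where "p = fst pq"
  define q where "q = snd pq"
  have pmax: "cmod (g$i$j) \<le> cmod (g$p$q)" for i j
    using pq[rule_format, of "(i,j)"] unfolding p_def q_def by (cases pq) auto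
  define piv where "piv = g$p$q"
  have piv0: "piv \<noteq> 0"
  proof
    assume "piv = 0"
    then have "g$i$j = 0" for i j using pmax[of i j] unfolding piv_def by simp
    then have "g *v (\<chi> i. 1) = 0" by (simp add: matrix_vector_mult_def vec_eq_iff)
    then have "(\<chi> i. 1) = (0::complex^3)" using ker_triv[OF dg] by blast
    then show False by (simp add: vec_eq_iff)
  qed
  obtain c2 c3 where dq: "distinct [q, c2, c3]" using other2 by blast
  define v where "v c = (\<chi> i. if i = c then 1 else if i = q then - (g$p$c / piv) else 0)" for c
  have gv: "(g *v v c)$r = g$r$c - (g$p$c / piv) * g$r$q" if cq: "c \<noteq> q" for c r
  proof -
    have "(g *v v c)$r = (\<Sum>i\<in>UNIV. (if i = c then g$r$i else 0) + (if i = q then - (g$p$c / piv) * g$r$i else 0))"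
      unfolding matrix_vector_mult_def v_def using cq by (simp, intro sum.cong) auto
    then show ?thesis by (simp add: sum.distrib)
  qed
  have gvp: "(g *v v c)$p = 0" if "c \<noteq> q" for c
    using gv[OF that, of p] piv0 unfolding piv_def by simp
  have vq: "(v c)$c = 1" "(v c)$q = - (g$p$c / piv)" if "c \<noteq> q" for c
    using that unfolding v_def by auto
  have vo: "(v c)$i = 0" if "i \<noteq> c" "i \<noteq> q" for c i
    using that unfolding v_def by auto
  have ratio: "cmod (g$i$j / piv) \<le> 1" for i j
    using pmax[of i j] piv0 unfolding piv_def by (simp add: norm_divide divide_le_eq_1)
  obtain rb where rb: "\<forall>y. (\<lambda>(r,b). if r = p then -1 else cmod ((g *v v (if b then c2 else c3))$r)) y
      \<le> (\<lambda>(r,b). if r = p then -1 else cmod ((g *v v (if b then c2 else c3))$r)) rb"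
    using finite_argmax[of "\<lambda>(r,b). if r = p then -1 else cmod ((g *v v (if b then c2 else c3))$r)"] by blast
  define p2 where "p2 = fst rb"
  define C2 where "C2 = (if snd rb then c2 else c3)"
  define C3 where "C3 = (if snd rb then c3 else c2)"
  obtain r0 where r0: "r0 \<noteq> p"
  proof -
    obtain a b where "distinct [p, a, b]" using other2 by blast
    then have "a \<noteq> p" by auto
    then show ?thesis by (rule that)
  qed
  have cand: "(if r = p then -1 else cmod ((g *v v (if b then c2 else c3))$r)) \<le>
       (if p2 = p then -1 else cmod ((g *v v C2)$p2))" for r b
    using rb[rule_format, of "(r,b)"] unfolding p2_def C2_def by (cases rb) auto
  have p2p: "p2 \<noteq> p"
  proof
    assume "p2 = p"
    then have "cmod ((g *v v c2)$r0) \<le> -1" using cand[of r0 True] r0 by simp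
    then show False by (smt (verit) norm_ge_zero)
  qed
  have dq2: "distinct [q, C2, C3]" using dq unfolding C2_def C3_def by auto
  have nq: "C2 \<noteq> q" "C3 \<noteq> q" "C3 \<noteq> C2" "q \<noteq> C2" "q \<noteq> C3" "C2 \<noteq> C3" using dq2 by auto
  define piv2 where "piv2 = (g *v v C2)$p2"
  have max2: "cmod ((g *v v C2)$r) \<le> cmod piv2" "cmod ((g *v v C3)$r) \<le> cmod piv2" if "r \<noteq> p" for r
    using cand[of r True] cand[of r False] that p2p unfolding piv2_def C2_def C3_def
    by (cases "snd rb"; simp)+
  have vC2: "v C2 \<noteq> 0"
  proof
    assume "v C2 = 0"
    then have "(v C2)$C2 = 0" by simp
    then show False using vq(1)[of C2] dq2 nq by auto
  qed
  have piv20: "piv2 \<noteq> 0"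
  proof
    assume "piv2 = 0"
    then have "(g *v v C2)$r = 0" for r using max2(1)[of r] gvp[of C2] dq2 nq by (cases "r = p") auto
    then have "g *v v C2 = 0" by (simp add: vec_eq_iff)
    then show False using ker_triv[OF dg] vC2 by blast
  qed
  define \<beta> where "\<beta> = (g *v v C3)$p2 / piv2"
  have \<beta>1: "cmod \<beta> \<le> 1" using max2(2)[OF p2p] piv20 unfolding \<beta>_def by (simp add: norm_divide divide_le_eq_1)
  define u3 where "u3 = v C3 - \<beta> *s v C2"
  have gu3: "(g *v u3)$r = (g *v v C3)$r - \<beta> * (g *v v C2)$r" for r
    unfolding u3_def by (simp add: matrix_vector_mult_diff_distrib vector_scalar_commute)
  have gu3p: "(g *v u3)$p = 0" using gu3[of p] gvp dq2 nq by simp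
  have gu3p2: "(g *v u3)$p2 = 0" using gu3[of p2] piv20 unfolding \<beta>_def piv2_def by simp
  obtain p3 where dp: "distinct [p, p2, p3]"
  proof -
    obtain a b where "distinct [p, a, b]" using other2 by blast
    then show ?thesis using that p2p distinct3_all[of p a b p2] by auto
  qed
  define piv3 where "piv3 = (g *v u3)$p3"
  have u3C3: "u3$C3 = 1" using dq2 nq unfolding u3_def by (simp add: vq vo)
  have piv30: "piv3 \<noteq> 0"
  proof
    assume "piv3 = 0"
    then have "(g *v u3)$r = 0" for r using distinct3_all[OF dp, of r] gu3p gu3p2 unfolding piv3_def by auto
    then have "g *v u3 = 0" by (simp add: vec_eq_iff)
    then have "u3 = 0" using ker_triv[OF dg] by blast
    then show False using u3C3 by simp
  qed
  define w1 where "w1 = (\<chi> i. if i = q then 1 else (0::complex))"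
  have gw1: "(g *v w1)$r = g$r$q" for r
  proof -
    have "(\<Sum>j\<in>UNIV. g$r$j * (if j = q then 1 else 0)) = (\<Sum>j\<in>UNIV. if j = q then g$r$j else 0)"
      by (rule sum.cong) auto
    then show ?thesis unfolding matrix_vector_mult_def w1_def by simp
  qed
  define W where "W j = (if j = 1 then w1 else if j = 2 then v C2 else u3)" for j :: 3
  define k1 where "k1 = (\<chi> r. g$r$q / piv)"
  define k2 where "k2 = (\<chi> r. (g *v v C2)$r / piv2)"
  define k3 where "k3 = (\<chi> r. (g *v u3)$r / piv3)"
  define Kc where "Kc j = (if j = 1 then k1 else if j = 2 then k2 else k3)" for j :: 3
  define d where "d = (\<chi> j::3. if j = 1 then piv else if j = 2 then piv2 else piv3)"
  define H where "H = (\<chi> i j. W j $ i)"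
  define K where "K = (\<chi> i j. Kc j $ i)"
  have eq: "g ** H = K ** diagm d"
    unfolding H_def K_def cols_mult diagm_mult
  proof (simp add: vec_eq_iff, intro allI)
    fix i j :: 3
    show "(g *v W j) $ i = Kc j $ i * d $ j"
      using exhaust_3[of j] piv0 piv20 piv30
      by (elim disjE) (simp_all add: W_def Kc_def d_def k1_def k2_def k3_def gw1 piv_def piv2_def piv3_def)
  qed
  have Kb: "cmod (K$i$j) \<le> 1" for i j
  proof -
    have "cmod (k1$i) \<le> 1" unfolding k1_def piv_def using ratio[of i q] unfolding piv_def by simp
    moreover have "cmod (k2$i) \<le> 1"
    proof (cases "i = p")
      case True then show ?thesis unfolding k2_def using gvp dq2 nq by simp
    next
      case False then show ?thesis unfolding k2_def using max2(1)[OF False] piv20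
        by (simp add: norm_divide divide_le_eq_1 piv2_def)
    qed
    moreover have "cmod (k3$i) \<le> 1"
      using distinct3_all[OF dp, of i] gu3p gu3p2 piv30 unfolding k3_def piv3_def by auto
    ultimately show ?thesis unfolding K_def Kc_def using exhaust_3[of j] by auto
  qed
  have Hb: "cmod (H$i$j) \<le> 2" for i j
  proof -
    have vb: "cmod ((v c)$i) \<le> 1" if "c \<noteq> q" for c
      unfolding v_def using ratio[of p c] that by (auto simp: norm_minus_commute)
    have "cmod (w1$i) \<le> 2" unfolding w1_def by simp
    moreover have "cmod ((v C2)$i) \<le> 2" using vb[of C2] dq2 nq by simp
    moreover have "cmod (u3$i) \<le> 2"
    proof -
      have "cmod (u3$i) \<le> cmod ((v C3)$i) + cmod \<beta> * cmod ((v C2)$i)"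
        unfolding u3_def by (simp add: norm_triangle_ineq4 norm_mult[symmetric])
      also have "\<dots> \<le> 1 + 1 * 1" using vb[of C3] vb[of C2] dq2 nq \<beta>1
        by (intro add_mono mult_mono) auto
      finally show ?thesis by simp
    qed
    ultimately show ?thesis unfolding H_def W_def using exhaust_3[of j] by auto
  qed
  have dK: "cmod (det K) = 1"
  proof (rule det_tri1[OF dp])
    show "K$p$1 = 1" unfolding K_def Kc_def k1_def piv_def using piv0 unfolding piv_def by simp
    show "K$p$2 = 0" unfolding K_def Kc_def k2_def using gvp dq2 nq by simp
    show "K$p$3 = 0" unfolding K_def Kc_def k3_def using gu3p by simp
    show "K$p2$2 = 1" unfolding K_def Kc_def k2_def using piv20 unfolding piv2_def by simp
    show "K$p2$3 = 0" unfolding K_def Kc_def k3_def using gu3p2 by simp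
    show "K$p3$3 = 1" unfolding K_def Kc_def k3_def using piv30 unfolding piv3_def by simp
  qed
  have dH: "cmod (det H) = 1"
  proof (rule det_tri2[OF dq2])
    show "H$q$1 = 1" unfolding H_def W_def w1_def by simp
    show "H$C2$1 = 0" unfolding H_def W_def w1_def using dq2 nq by simp
    show "H$C3$1 = 0" unfolding H_def W_def w1_def using dq2 nq by simp
    show "H$C2$2 = 1" unfolding H_def W_def using vq dq2 nq by simp
    show "H$C3$2 = 0" unfolding H_def W_def using vo dq2 nq by simp
    show "H$C3$3 = 1" unfolding H_def W_def using u3C3 by simp
  qed
  show ?thesis using eq Kb Hb dK dH by blast
qed


lemma mono_bound: assumes "\<And>i. cmod (y$i) \<le> R" shows "cmod (mono e y) \<le> R ^ (sum e UNIV)"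
proof -
  have "cmod (mono e y) = (\<Prod>i\<in>UNIV. cmod (y$i) ^ e i)" unfolding mono_def by (simp add: prod_norm[symmetric] norm_power)
  also have "\<dots> \<le> (\<Prod>i\<in>UNIV. R ^ e i)"
    by (intro prod_mono conjI power_mono assms zero_le_power norm_ge_zero)
  also have "\<dots> = R ^ (sum e UNIV)" by (simp add: power_sum)
  finally show ?thesis .
qed

lemma tendsto_zero_bounded:
  assumes "(a \<longlongrightarrow> 0) F" "\<And>n. cmod (b n) \<le> C" shows "((\<lambda>n. a n * b n :: complex) \<longlongrightarrow> 0) F"
proof (rule tendsto_0_le[OF assms(1), of _ C])
  show "\<forall>\<^sub>F x in F. norm (a x * b x) \<le> norm (a x) * C"
    using assms(2) by (intro always_eventually allI) (simp add: norm_mult mult_left_mono)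
qed

lemma mv_component_bound:
  fixes H :: "complex^3^3" assumes "\<And>i j. cmod (H$i$j) \<le> B"
  shows "cmod ((H *v x)$i) \<le> B * (\<Sum>j\<in>UNIV. cmod (x$j))"
proof -
  have "cmod ((H *v x)$i) \<le> (\<Sum>j\<in>UNIV. cmod (H$i$j * x$j))"
    unfolding matrix_vector_mult_def by (simp add: norm_sum)
  also have "\<dots> \<le> (\<Sum>j\<in>UNIV. B * cmod (x$j))"
    by (intro sum_mono) (simp add: norm_mult assms mult_right_mono)
  finally show ?thesis by (simp add: sum_distrib_left)
qed

lemma det_tendsto: fixes K :: "nat \<Rightarrow> complex^3^3"
  assumes "K \<longlonglongrightarrow> K0" shows "(\<lambda>n. det (K n)) \<longlonglongrightarrow> det K0"
  unfolding det_3 by (intro tendsto_intros assms)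

lemma mv_tendsto: fixes K :: "nat \<Rightarrow> complex^3^3"
  assumes "K \<longlonglongrightarrow> K0" shows "(\<lambda>n. K n *v y) \<longlonglongrightarrow> K0 *v y"
  unfolding matrix_vector_mult_def by (intro tendsto_intros assms)

lemma diagm_mv: "diagm d *v x = (\<chi> i. d$i * x$i)"
proof -
  have "(\<Sum>j\<in>UNIV. (if i = j then d$i else 0) * x$j) = d$i * x$i" for i
  proof -
    have "(\<Sum>j\<in>UNIV. (if i = j then d$i else 0) * x$j) = (\<Sum>j\<in>UNIV. if j = i then d$i * x$j else 0)"
      by (rule sum.cong) auto
    then show ?thesis by simp
  qed
  then show ?thesis by (simp add: diagm_def matrix_vector_mult_def vec_eq_iff)
qed

lemma unstable_reduce:
  assumes F: "form 4 F" and U: "quartic_unstable F"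
  shows "\<exists>K a. det K \<noteq> 0 \<and> cmod (a$1 * a$2 * a$3) = 1 \<and>
           (\<forall>e\<in>Exps 4. coef (\<lambda>x. F (K *v x)) e \<noteq> 0 \<longrightarrow> cmod (mono e a) < 1)"
proof -
  obtain g :: "nat \<Rightarrow> complex^3^3" where g1: "\<And>n. det (g n) = 1"
    and gl: "\<And>x. (\<lambda>n. F (g n *v x)) \<longlonglongrightarrow> 0"
    using U unfolding quartic_unstable_def by blast
  have "\<forall>n. \<exists>K H d. g n ** H = K ** diagm d \<and> (\<forall>i j. cmod (K$i$j) \<le> 1) \<and> cmod (det K) = 1
           \<and> (\<forall>i j. cmod (H$i$j) \<le> 2) \<and> cmod (det H) = 1"
    using lu3 g1 by simp
  then obtain K H d where KHd: "\<And>n. g n ** H n = K n ** diagm (d n)"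
    and Kb: "\<And>n i j. cmod (K n $i$j) \<le> 1" and dK: "\<And>n. cmod (det (K n)) = 1"
    and Hb: "\<And>n i j. cmod (H n $i$j) \<le> 2" and dH: "\<And>n. cmod (det (H n)) = 1"
    by metis
  define \<Phi> where "\<Phi> n = (\<lambda>y. F (g n *v y))" for n
  have F\<Phi>: "form 4 (\<Phi> n)" for n unfolding \<Phi>_def by (rule form_subst[OF F])
  have c\<Phi>: "(\<lambda>n. coef (\<Phi> n) e) \<longlonglongrightarrow> 0" for e
    using coef_tendsto[of "\<lambda>n. \<Phi> n" "\<lambda>_. 0" sequentially e] gl unfolding \<Phi>_def coef_zero by simp
  define G where "G n = (\<lambda>x. F (K n *v (\<chi> i. d n $ i * x $ i)))" for n
  have Gl: "(\<lambda>n. G n x) \<longlonglongrightarrow> 0" for x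
  proof -
    define R where "R = 2 * (\<Sum>j\<in>UNIV. cmod (x$j))"
    have eqG: "G n x = (\<Sum>e\<in>Exps 4. coef (\<Phi> n) e * mono e (H n *v x))" for n
    proof -
      have "g n *v (H n *v x) = (g n ** H n) *v x" by (simp add: matrix_vector_mul_assoc)
      also have "\<dots> = (K n ** diagm (d n)) *v x" using KHd by simp
      also have "\<dots> = K n *v (diagm (d n) *v x)" by (simp add: matrix_vector_mul_assoc)
      finally have "g n *v (H n *v x) = K n *v (\<chi> i. d n $ i * x $ i)" by (simp add: diagm_mv)
      then have "G n x = \<Phi> n (H n *v x)" unfolding G_def \<Phi>_def by simp
      then show ?thesis using form4_repr[OF F\<Phi>] by simp
    qed
    have "(\<lambda>n. \<Sum>e\<in>Exps 4. coef (\<Phi> n) e * mono e (H n *v x)) \<longlonglongrightarrow> 0"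
    proof (rule tendsto_null_sum)
      fix e assume e: "e \<in> Exps 4"
      show "(\<lambda>n. coef (\<Phi> n) e * mono e (H n *v x)) \<longlonglongrightarrow> 0"
      proof (rule tendsto_zero_bounded[OF c\<Phi>])
        fix n
        have "cmod (mono e (H n *v x)) \<le> R ^ (sum e UNIV)"
          by (rule mono_bound) (unfold R_def, rule mv_component_bound, rule Hb)
        then show "cmod (mono e (H n *v x)) \<le> R ^ 4" using e unfolding Exps_def by simp
      qed
    qed
    then show ?thesis using eqG by simp
  qed
  define \<Psi> where "\<Psi> n = (\<lambda>y. F (K n *v y))" for n
  have F\<Psi>: "form 4 (\<Psi> n)" for n unfolding \<Psi>_def by (rule form_subst[OF F])
  have cG: "coef (G n) e = coef (\<Psi> n) e * mono e (d n)" if e: "e \<in> Exps 4" for n e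
  proof (rule coef_unique[OF _ e])
    fix x
    show "G n x = (\<Sum>e\<in>Exps 4. (coef (\<Psi> n) e * mono e (d n)) * mono e x)"
      unfolding G_def using form4_repr[OF F\<Psi>, of n "\<chi> i. d n $ i * x $ i"]
      by (simp add: \<Psi>_def mono_scale mult.assoc)
  qed
  have cGl: "(\<lambda>n. coef (G n) e) \<longlonglongrightarrow> 0" for e
    using coef_tendsto[of G "\<lambda>_. 0" sequentially e] Gl unfolding coef_zero by simp
  have "bounded (range K)"
  proof -
    have "norm (K n) \<le> 9" for n
    proof -
      have "norm (K n) \<le> (\<Sum>i\<in>UNIV. norm (K n $ i))" unfolding norm_vec_def by (rule L2_set_le_sum) simp
      also have "\<dots> \<le> (\<Sum>i\<in>(UNIV::3 set). 3)"
      proof (rule sum_mono)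
        fix i
        have "norm (K n $ i) \<le> (\<Sum>j\<in>UNIV. norm (K n $ i $ j))" unfolding norm_vec_def by (rule L2_set_le_sum) simp
        also have "\<dots> \<le> (\<Sum>j\<in>(UNIV::3 set). 1)" by (rule sum_mono) (use Kb in simp)
        finally show "norm (K n $ i) \<le> 3" by simp
      qed
      finally show ?thesis by simp
    qed
    then show ?thesis unfolding bounded_iff by blast
  qed
  then obtain K0 r where r: "strict_mono r" and Kr: "(K \<circ> r) \<longlonglongrightarrow> K0"
    using bounded_imp_convergent_subsequence by blast
  have Kr': "(\<lambda>n. K (r n)) \<longlonglongrightarrow> K0" using Kr by (simp add: o_def)
  have dK0: "cmod (det K0) = 1"
  proof -
    have "(\<lambda>n. cmod (det (K (r n)))) \<longlonglongrightarrow> cmod (det K0)"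
      by (intro tendsto_intros det_tendsto Kr')
    moreover have "(\<lambda>n. cmod (det (K (r n)))) \<longlonglongrightarrow> 1" using dK by simp
    ultimately show ?thesis using LIMSEQ_unique by blast
  qed
  define \<Psi>0 where "\<Psi>0 = (\<lambda>y. F (K0 *v y))"
  have c\<Psi>l: "(\<lambda>n. coef (\<Psi> (r n)) e) \<longlonglongrightarrow> coef \<Psi>0 e" for e
  proof (rule coef_tendsto)
    fix y show "(\<lambda>n. \<Psi> (r n) y) \<longlonglongrightarrow> \<Psi>0 y"
      unfolding \<Psi>_def \<Psi>0_def by (rule form_continuous[OF F mv_tendsto[OF Kr']])
  qed
  define S where "S = {e\<in>Exps 4. coef \<Psi>0 e \<noteq> 0}"
  have ev: "\<forall>\<^sub>F n in sequentially. \<forall>e\<in>S. cmod (mono e (d (r n))) < 1"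
  proof (rule eventually_ball_finite)
    show "finite S" unfolding S_def by simp
    show "\<forall>e\<in>S. \<forall>\<^sub>F n in sequentially. cmod (mono e (d (r n))) < 1"
    proof
      fix e assume "e \<in> S"
      then have e: "e \<in> Exps 4" and ne: "coef \<Psi>0 e \<noteq> 0" unfolding S_def by auto
      have "(\<lambda>n. coef (G (r n)) e / coef (\<Psi> (r n)) e) \<longlonglongrightarrow> 0 / coef \<Psi>0 e"
        by (intro tendsto_divide c\<Psi>l ne LIMSEQ_subseq_LIMSEQ[OF cGl r, unfolded o_def])
      moreover have "\<forall>\<^sub>F n in sequentially. coef (\<Psi> (r n)) e \<noteq> 0"
        using tendsto_imp_eventually_ne[OF c\<Psi>l ne] .
      then have "\<forall>\<^sub>F n in sequentially. coef (G (r n)) e / coef (\<Psi> (r n)) e = mono e (d (r n))"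
        by eventually_elim (simp add: cG[OF e])
      ultimately have "(\<lambda>n. mono e (d (r n))) \<longlonglongrightarrow> 0"
        using Lim_transform_eventually by fastforce
      then have "(\<lambda>n. cmod (mono e (d (r n)))) \<longlonglongrightarrow> 0" using tendsto_norm_zero by blast
      then show "\<forall>\<^sub>F n in sequentially. cmod (mono e (d (r n))) < 1"
        by (rule order_tendstoD(2)) simp
    qed
  qed
  then obtain N where N: "\<forall>e\<in>S. cmod (mono e (d (r N))) < 1"
    unfolding eventually_sequentially by blast
  define a where "a = d (r N)"
  have "det (g (r N) ** H (r N)) = det (K (r N) ** diagm a)" using KHd unfolding a_def by simp
  then have "det (H (r N)) = det (K (r N)) * (a$1 * a$2 * a$3)"
    using g1 by (simp add: det_mul det_diagonal diagm_def prod3)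
  then have "cmod (det (H (r N))) = cmod (det (K (r N))) * cmod (a$1 * a$2 * a$3)"
    by (simp only: norm_mult)
  then have "cmod (a$1 * a$2 * a$3) = 1" using dK[of "r N"] dH[of "r N"] by simp
  moreover have "det K0 \<noteq> 0" using dK0 by auto
  ultimately show ?thesis using N unfolding S_def a_def \<Psi>0_def by blast
qed


lemma nat4_cases: "(x::nat) \<le> 4 \<Longrightarrow> x = 0 \<or> x = 1 \<or> x = 2 \<or> x = 3 \<or> x = 4" by auto

lemma classify1:
  fixes x y z :: nat and ua ub uc :: real
  assumes "x+y+z = 4" "ub \<le> ua" "uc \<le> ub" "ua+ub+uc = 0" "real x*ua + real y*ub + real z*uc < 0"
  shows "x \<le> 1 \<or> (x = 2 \<and> y = 0 \<and> z = 2 \<and> 0 < ub)"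
proof -
  have "x \<le> 4" "y \<le> 4" using assms(1) by arith+
  then have "x = 0 \<or> x = 1 \<or> x = 2 \<or> x = 3 \<or> x = 4" "y = 0 \<or> y = 1 \<or> y = 2 \<or> y = 3 \<or> y = 4"
    using nat4_cases by blast+
  then show ?thesis using assms by (elim disjE) (simp_all, linarith?)
qed

lemma classify2:
  fixes x y z :: nat and ua ub uc :: real
  assumes "x+y+z = 4" "ub \<le> ua" "uc \<le> ub" "ua+ub+uc = 0" "real x*ua + real y*ub + real z*uc < 0" "0 < ub"
  shows "\<not>(x = 1 \<and> y = 3) \<and> \<not>(x = 1 \<and> y = 2 \<and> z = 1) \<and> y \<noteq> 4"
proof -
  have "x \<le> 4" "y \<le> 4" using assms(1) by arith+
  then have "x = 0 \<or> x = 1 \<or> x = 2 \<or> x = 3 \<or> x = 4" "y = 0 \<or> y = 1 \<or> y = 2 \<or> y = 3 \<or> y = 4"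
    using nat4_cases by blast+
  then show ?thesis using assms by (elim disjE) (simp_all, linarith?)
qed

definition ax :: "3 \<Rightarrow> complex^3" where "ax i = (\<chi> j. if j = i then 1 else 0)"

lemma d3_ne: "distinct [\<alpha>, \<beta>, \<gamma>] \<Longrightarrow> \<alpha> \<noteq> \<beta> \<and> \<beta> \<noteq> \<alpha> \<and> \<alpha> \<noteq> \<gamma> \<and> \<gamma> \<noteq> \<alpha> \<and> \<beta> \<noteq> \<gamma> \<and> \<gamma> \<noteq> \<beta>"
  by auto

definition mkE :: "3 \<Rightarrow> 3 \<Rightarrow> 3 \<Rightarrow> nat \<Rightarrow> nat \<Rightarrow> nat \<Rightarrow> 3 \<Rightarrow> nat" where
  "mkE \<alpha> \<beta> \<gamma> x y z = (\<lambda>i. if i = \<alpha> then x else if i = \<beta> then y else z)"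

lemma univ_abg: "distinct [\<alpha>, \<beta>, \<gamma>::3] \<Longrightarrow> UNIV = {\<alpha>, \<beta>, \<gamma>}"
  using distinct3_all by auto

lemma prod_abg: "distinct [\<alpha>, \<beta>, \<gamma>::3] \<Longrightarrow> prod f UNIV = f \<alpha> * f \<beta> * (f \<gamma> :: 'a::comm_monoid_mult)"
proof -
  assume d: "distinct [\<alpha>, \<beta>, \<gamma>::3]"
  have "prod f UNIV = prod f {\<alpha>, \<beta>, \<gamma>}" using univ_abg[OF d] by simp
  also have "\<dots> = f \<alpha> * (f \<beta> * f \<gamma>)" using d by simp
  finally show ?thesis by (simp add: mult.assoc)
qed

lemma sum_abg: "distinct [\<alpha>, \<beta>, \<gamma>::3] \<Longrightarrow> sum f UNIV = f \<alpha> + f \<beta> + (f \<gamma> :: 'a::comm_monoid_add)"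
proof -
  assume d: "distinct [\<alpha>, \<beta>, \<gamma>::3]"
  have "sum f UNIV = sum f {\<alpha>, \<beta>, \<gamma>}" using univ_abg[OF d] by simp
  also have "\<dots> = f \<alpha> + (f \<beta> + f \<gamma>)" using d by simp
  finally show ?thesis by (simp add: add.assoc)
qed

lemma mkE_eq: "distinct [\<alpha>, \<beta>, \<gamma>] \<Longrightarrow> (e = mkE \<alpha> \<beta> \<gamma> x y z) \<longleftrightarrow> (e \<alpha> = x \<and> e \<beta> = y \<and> e \<gamma> = z)"
proof -
  assume d: "distinct [\<alpha>, \<beta>, \<gamma>]"
  show ?thesis
  proof
    assume "e = mkE \<alpha> \<beta> \<gamma> x y z" then show "e \<alpha> = x \<and> e \<beta> = y \<and> e \<gamma> = z" using d3_ne[OF d] by (simp add: mkE_def)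
  next
    assume h: "e \<alpha> = x \<and> e \<beta> = y \<and> e \<gamma> = z"
    show "e = mkE \<alpha> \<beta> \<gamma> x y z"
    proof (rule ext)
      fix i
      from distinct3_all[OF d, of i] show "e i = mkE \<alpha> \<beta> \<gamma> x y z i"
        using h d3_ne[OF d] by (elim disjE) (simp_all add: mkE_def)
    qed
  qed
qed

lemma mkE_app: "distinct [\<alpha>, \<beta>, \<gamma>] \<Longrightarrow> mkE \<alpha> \<beta> \<gamma> x y z \<alpha> = x \<and> mkE \<alpha> \<beta> \<gamma> x y z \<beta> = y \<and> mkE \<alpha> \<beta> \<gamma> x y z \<gamma> = z"
  unfolding mkE_def by auto

lemma Exps_abg: "distinct [\<alpha>, \<beta>, \<gamma>] \<Longrightarrow> e \<in> Exps d \<longleftrightarrow> e \<alpha> + e \<beta> + e \<gamma> = d"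
  unfolding Exps_def by (simp add: sum_abg)

lemma ax_nth: "ax i $ j = (if j = i then 1 else 0)"
  unfolding ax_def by simp

lemma ax_nz: "ax i \<noteq> 0"
proof
  assume "ax i = 0" then have "ax i $ i = 0" by simp
  then show False by (simp add: ax_nth)
qed

definition MP :: "(3 \<Rightarrow> nat) \<Rightarrow> complex^3 \<Rightarrow> complex^3 \<Rightarrow> complex poly" where
  "MP e p x = (\<Prod>i\<in>UNIV. [:p$i, x$i:] ^ e i)"

lemma mono_line: "mono e (p + cvec t x) = poly (MP e p x) t"
  unfolding mono_def MP_def cvec_def by (simp add: poly_prod poly_power algebra_simps)

lemma form_line:
  assumes "\<forall>x. F x = (\<Sum>e\<in>Exps 4. c e * mono e x)"
  shows "F (p + cvec t x) = poly (\<Sum>e\<in>Exps 4. smult (c e) (MP e p x)) t"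
  by (simp add: assms mono_line poly_sum)

lemma X_pow_poly: "poly ([:0,1:] ^ m * q) t = t ^ m * poly q t"
  by (simp add: poly_power)

lemma mult_ge_dvdI:
  assumes "\<forall>x. F x = (\<Sum>e\<in>Exps 4. c e * mono e x)"
    and "\<And>x. [:0,1:] ^ m dvd (\<Sum>e\<in>Exps 4. smult (c e) (MP e p x))"
  shows "mult_ge F p m"
  unfolding mult_ge_def
proof
  fix x
  obtain q where q: "(\<Sum>e\<in>Exps 4. smult (c e) (MP e p x)) = [:0,1:] ^ m * q"
    using assms(2)[of x] by (elim dvdE)
  show "\<exists>q. \<forall>t. F (p + cvec t x) = t ^ m * poly q t"
    by (rule exI[of _ q]) (simp add: form_line[OF assms(1)] q X_pow_poly)
qed

lemma dvd_sum_supported: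
  assumes "\<And>e. e \<in> Exps 4 \<Longrightarrow> c e \<noteq> 0 \<Longrightarrow> r dvd MP e p x"
  shows "r dvd (\<Sum>e\<in>Exps 4. smult (c e) (MP e p x))"
proof (rule dvd_sum)
  fix e assume "e \<in> Exps 4"
  then show "r dvd smult (c e) (MP e p x)" using assms by (cases "c e = 0") (auto intro: dvd_smult)
qed

lemma X_dvd_lin: "[:0,1:] ^ k dvd [:0, b:] ^ k"
proof -
  have "[:0,1:] dvd [:0, b:]" by (rule dvdI[of _ _ "[:b:]"]) simp
  then show ?thesis by (rule dvd_power_same)
qed

lemma MP_abg: "distinct [\<alpha>, \<beta>, \<gamma>] \<Longrightarrow>
   MP e p x = [:p$\<alpha>, x$\<alpha>:] ^ e \<alpha> * [:p$\<beta>, x$\<beta>:] ^ e \<beta> * [:p$\<gamma>, x$\<gamma>:] ^ e \<gamma>"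
  unfolding MP_def by (rule prod_abg)

lemma mono_abg: "distinct [\<alpha>, \<beta>, \<gamma>] \<Longrightarrow> mono e x = x$\<alpha> ^ e \<alpha> * x$\<beta> ^ e \<beta> * x$\<gamma> ^ e \<gamma>"
  unfolding mono_def by (rule prod_abg)

lemma caseA:
  assumes F: "\<forall>x. F x = (\<Sum>e\<in>Exps 4. c e * mono e x)" and d3: "distinct [\<alpha>, \<beta>, \<gamma>]"
    and A: "\<And>e. e \<in> Exps 4 \<Longrightarrow> c e \<noteq> 0 \<Longrightarrow> e \<alpha> \<le> 1"
  shows "has_triple_point F"
  unfolding has_triple_point_def
proof (intro exI conjI)
  show "ax \<alpha> \<noteq> 0" by (rule ax_nz)
  show "mult_ge F (ax \<alpha>) 3"
  proof (rule mult_ge_dvdI[OF F], rule dvd_sum_supported)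
    fix x :: "complex^3" and e assume e: "e \<in> Exps 4" and ce: "c e \<noteq> 0"
    have s: "e \<alpha> + e \<beta> + e \<gamma> = 4" using e Exps_abg[OF d3] by blast
    have "[:0,1:] ^ (e \<beta> + e \<gamma>) dvd [:0, x$\<beta>:] ^ e \<beta> * [:0, x$\<gamma>:] ^ e \<gamma>"
      unfolding power_add by (intro mult_dvd_mono X_dvd_lin)
    moreover have "[:0,1:] ^ 3 dvd [:0,1::complex:] ^ (e \<beta> + e \<gamma>)"
      using A[OF e ce] s by (intro le_imp_power_dvd) arith
    ultimately have "[:0,1:] ^ 3 dvd [:0, x$\<beta>:] ^ e \<beta> * [:0, x$\<gamma>:] ^ e \<gamma>"
      using dvd_trans by blast
    moreover have "MP e (ax \<alpha>) x = [:1, x$\<alpha>:] ^ e \<alpha> * ([:0, x$\<beta>:] ^ e \<beta> * [:0, x$\<gamma>:] ^ e \<gamma>)"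
      unfolding MP_abg[OF d3] using d3_ne[OF d3] by (simp add: ax_nth mult.assoc)
    ultimately show "[:0,1:] ^ 3 dvd MP e (ax \<alpha>) x" by (simp add: dvd_mult)
  qed
qed


lemma mkE_Exps: "distinct [\<alpha>, \<beta>, \<gamma>] \<Longrightarrow> mkE \<alpha> \<beta> \<gamma> x y z \<in> Exps (x+y+z)"
  using Exps_abg[of \<alpha> \<beta> \<gamma> "mkE \<alpha> \<beta> \<gamma> x y z"] mkE_app[of \<alpha> \<beta> \<gamma> x y z] by simp

lemma tp_gamma2:
  assumes F: "\<forall>x. F x = (\<Sum>e\<in>Exps 4. c e * mono e x)" and d3: "distinct [\<alpha>, \<beta>, \<gamma>]"
    and G2: "\<And>e. e \<in> Exps 4 \<Longrightarrow> c e \<noteq> 0 \<Longrightarrow> 2 \<le> e \<gamma>"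
  shows "has_triple_point F"
proof -
  note ne = d3_ne[OF d3]
  define A1 where "A1 = {e \<in> Exps 4. e \<gamma> = 2}"
  have finA1: "finite A1" unfolding A1_def by simp
  have A1s: "e \<alpha> + e \<beta> = 2" if "e \<in> A1" for e
    using that Exps_abg[OF d3, of e 4] unfolding A1_def by auto
  define b where "b k = (\<Sum>e\<in>A1. if e \<alpha> = k then c e else 0)" for k
  define h where "h p = (\<Sum>e\<in>A1. c e * (p$\<alpha>) ^ (e \<alpha>) * (p$\<beta>) ^ (e \<beta>))" for p :: "complex^3"
  obtain p where p0: "p \<noteq> 0" and pg: "p$\<gamma> = 0" and hp: "h p = 0"
  proof (cases "b 2 = 0")
    case True
    have "h (ax \<alpha>) = (\<Sum>e\<in>A1. if e \<alpha> = 2 then c e else 0)"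
      unfolding h_def
    proof (rule sum.cong[OF refl])
      fix e assume "e \<in> A1"
      then have "e \<alpha> + e \<beta> = 2" by (rule A1s)
      then have "e \<beta> = 0 \<longleftrightarrow> e \<alpha> = 2" by arith
      then show "c e * (ax \<alpha> $ \<alpha>) ^ e \<alpha> * (ax \<alpha> $ \<beta>) ^ e \<beta> = (if e \<alpha> = 2 then c e else 0)"
        using ne by (auto simp: ax_nth power_0_left)
    qed
    then have "h (ax \<alpha>) = 0" using True unfolding b_def by simp
    moreover have "ax \<alpha> $ \<gamma> = 0" using ne by (simp add: ax_nth)
    ultimately show ?thesis using that ax_nz by blast
  next
    case False
    define r where "r = csqrt ((b 1)^2 - 4 * b 2 * b 0)"
    define s where "s = (- b 1 + r) / (2 * b 2)"
    define p where "p = (\<chi> i. if i = \<alpha> then s else if i = \<beta> then 1 else (0::complex))"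
    have pa: "p$\<alpha> = s" "p$\<beta> = 1" "p$\<gamma> = 0" unfolding p_def using ne by auto
    have "h p = (\<Sum>e\<in>A1. (if e \<alpha> = 0 then c e else 0) + (if e \<alpha> = 1 then c e else 0) * s + (if e \<alpha> = 2 then c e else 0) * s^2)"
      unfolding h_def
    proof (rule sum.cong[OF refl])
      fix e assume "e \<in> A1"
      then have "e \<alpha> + e \<beta> = 2" by (rule A1s)
      then have "e \<alpha> = 0 \<or> e \<alpha> = 1 \<or> e \<alpha> = 2" by arith
      then show "c e * (p $ \<alpha>) ^ e \<alpha> * (p $ \<beta>) ^ e \<beta> = (if e \<alpha> = 0 then c e else 0) + (if e \<alpha> = 1 then c e else 0) * s + (if e \<alpha> = 2 then c e else 0) * s^2"
        using pa by auto
    qed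
    also have "\<dots> = b 0 + b 1 * s + b 2 * s^2"
      unfolding b_def by (simp add: sum.distrib sum_distrib_right)
    also have "\<dots> = 0"
    proof -
      have rr: "r * r = (b 1)^2 - 4 * b 2 * b 0" unfolding r_def using power2_csqrt by (metis power2_eq_square)
      have "b 0 + b 1 * s + b 2 * s^2 = (r * r - ((b 1)^2 - 4 * b 2 * b 0)) / (4 * b 2)"
        unfolding s_def using False by (simp add: field_simps power2_eq_square)
      then show ?thesis using rr by simp
    qed
    finally have "h p = 0" .
    moreover have "p \<noteq> 0"
    proof
      assume "p = 0" then have "p$\<beta> = 0" by simp
      then show False using pa(2) by simp
    qed
    ultimately show ?thesis using that pa(3) by blast
  qed
  show ?thesis unfolding has_triple_point_def
  proof (intro exI conjI)
    show "p \<noteq> 0" by (rule p0)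
    show "mult_ge F p 3"
    proof (rule mult_ge_dvdI[OF F])
      fix x :: "complex^3"
      have split: "(\<Sum>e\<in>Exps 4. smult (c e) (MP e p x)) =
          (\<Sum>e\<in>Exps 4 - A1. smult (c e) (MP e p x)) + (\<Sum>e\<in>A1. smult (c e) (MP e p x))"
        by (rule sum.subset_diff) (auto simp: A1_def)
      have MPe: "MP e p x = [:p$\<alpha>, x$\<alpha>:] ^ e \<alpha> * [:p$\<beta>, x$\<beta>:] ^ e \<beta> * [:0, x$\<gamma>:] ^ e \<gamma>" for e
        using MP_abg[OF d3, of e p x] pg by simp
      have d1: "[:0,1:] ^ 3 dvd (\<Sum>e\<in>Exps 4 - A1. smult (c e) (MP e p x))"
      proof (rule dvd_sum)
        fix e assume e: "e \<in> Exps 4 - A1"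
        show "[:0,1:] ^ 3 dvd smult (c e) (MP e p x)"
        proof (cases "c e = 0")
          case False
          then have "3 \<le> e \<gamma>" using G2[of e] e unfolding A1_def by auto
          then have "[:0,1:] ^ 3 dvd [:0,1::complex:] ^ e \<gamma>" by (rule le_imp_power_dvd)
          also have "\<dots> dvd [:0, x$\<gamma>:] ^ e \<gamma>" by (rule X_dvd_lin)
          also have "\<dots> dvd MP e p x" unfolding MPe by simp
          finally show ?thesis by (rule dvd_smult)
        qed simp
      qed
      define Q where "Q = (\<Sum>e\<in>A1. smult (c e) ([:p$\<alpha>, x$\<alpha>:] ^ e \<alpha> * [:p$\<beta>, x$\<beta>:] ^ e \<beta>))"
      have A1eq: "(\<Sum>e\<in>A1. smult (c e) (MP e p x)) = [:0, x$\<gamma>:] ^ 2 * Q"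
        unfolding Q_def sum_distrib_left
      proof (rule sum.cong[OF refl])
        fix e assume "e \<in> A1" then have "e \<gamma> = 2" unfolding A1_def by auto
        then show "smult (c e) (MP e p x) = [:0, x$\<gamma>:] ^ 2 * smult (c e) ([:p$\<alpha>, x$\<alpha>:] ^ e \<alpha> * [:p$\<beta>, x$\<beta>:] ^ e \<beta>)"
          unfolding MPe by (simp add: algebra_simps)
      qed
      have "poly Q 0 = h p" unfolding Q_def h_def by (simp add: poly_sum poly_power mult.assoc)
      then have "[:0,1:] dvd Q" using hp poly_eq_0_iff_dvd[of Q 0] by simp
      then have "[:0,1:] ^ 2 * [:0,1:] dvd [:0, x$\<gamma>:] ^ 2 * Q" by (intro mult_dvd_mono X_dvd_lin)
      then have d2: "[:0,1:] ^ 3 dvd (\<Sum>e\<in>A1. smult (c e) (MP e p x))"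
      proof -
        have e3: "([:0,1:]::complex poly) ^ 3 = [:0,1:] ^ 2 * [:0,1:]" by (simp only: power3_eq_cube power2_eq_square)
        show ?thesis unfolding A1eq e3 by fact
      qed
      show "[:0,1:] ^ 3 dvd (\<Sum>e\<in>Exps 4. smult (c e) (MP e p x))"
        unfolding split using d1 d2 by (rule dvd_add)
    qed
  qed
qed


lemma coeff_X_pow: "coeff ([:0,1:] ^ k) n = (if n = k then 1 else (0::complex))"
proof -
  have "([:0,1:]::complex poly) ^ k = monom 1 k" by (simp add: monom_altdef)
  then show ?thesis by (simp add: coeff_monom)
qed

lemma flex_case:
  assumes F: "\<forall>x. F x = (\<Sum>e\<in>Exps 4. c e * mono e x)" and d3: "distinct [\<alpha>, \<beta>, \<gamma>]"
    and B1: "\<And>e. e \<in> Exps 4 \<Longrightarrow> c e \<noteq> 0 \<Longrightarrow> 1 \<le> e \<gamma>"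
    and B2: "\<And>e. e \<in> Exps 4 \<Longrightarrow> c e \<noteq> 0 \<Longrightarrow> e \<gamma> = 1 \<Longrightarrow> e = mkE \<alpha> \<beta> \<gamma> 0 3 1"
    and c202: "c (mkE \<alpha> \<beta> \<gamma> 2 0 2) \<noteq> 0" and c031: "c (mkE \<alpha> \<beta> \<gamma> 0 3 1) \<noteq> 0"
  shows "cubic_plus_inflectional_line F"
proof -
  note ne = d3_ne[OF d3]
  define E031 where "E031 = mkE \<alpha> \<beta> \<gamma> 0 3 1"
  define E202 where "E202 = mkE \<alpha> \<beta> \<gamma> 2 0 2"
  have E031v: "E031 \<alpha> = 0" "E031 \<beta> = 3" "E031 \<gamma> = 1" using mkE_app[OF d3] unfolding E031_def by auto
  have E031e: "E031 \<in> Exps 4" using mkE_Exps[OF d3, of 0 3 1] unfolding E031_def by simp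
  have E202e: "E202 \<in> Exps 4" using mkE_Exps[OF d3, of 2 0 2] unfolding E202_def by simp
  define em where "em e = (\<lambda>i. if i = \<gamma> then e i - 1 else e i)" for e :: "3 \<Rightarrow> nat"
  have emv: "em e \<alpha> = e \<alpha>" "em e \<beta> = e \<beta>" "em e \<gamma> = e \<gamma> - 1" for e unfolding em_def using ne by auto
  define C where "C x = (\<Sum>e\<in>Exps 4. c e * (if 1 \<le> e \<gamma> then mono (em e) x else 0))" for x
  define L where "L x = x$\<gamma>" for x :: "complex^3"
  have mono_em: "mono e x = x$\<gamma> * mono (em e) x" if "1 \<le> e \<gamma>" for e x
  proof -
    have "x$\<gamma> ^ e \<gamma> = x$\<gamma> * x$\<gamma> ^ (e \<gamma> - 1)" using that by (metis Suc_diff_le diff_Suc_1 power_Suc)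
    then show ?thesis unfolding mono_abg[OF d3] emv by (simp add: algebra_simps)
  qed
  have FLC: "F x = L x * C x" for x
    unfolding F[rule_format] L_def C_def sum_distrib_left
  proof (rule sum.cong[OF refl])
    fix e assume e: "e \<in> Exps 4"
    show "c e * mono e x = x$\<gamma> * (c e * (if 1 \<le> e \<gamma> then mono (em e) x else 0))"
    proof (cases "c e = 0")
      case False
      then have "1 \<le> e \<gamma>" using B1 e by blast
      then show ?thesis using mono_em by simp
    qed simp
  qed
  have tL: "ternary_form 1 L" unfolding ternary_form_iff L_def by (rule form_coord)
  have L0: "L \<noteq> (\<lambda>_. 0)"
  proof
    assume "L = (\<lambda>_. 0)" then have "L (ax \<gamma>) = 0" by simp
    then show False unfolding L_def by (simp add: ax_nth)
  qed
  have em3: "em e \<in> Exps 3" if "e \<in> Exps 4" "1 \<le> e \<gamma>" for e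
    using that Exps_abg[OF d3, of e 4] Exps_abg[OF d3, of "em e" 3] emv by auto
  have tC: "ternary_form 3 C" unfolding ternary_form_iff C_def[abs_def]
  proof (intro form_sum form_cmult)
    fix e assume e: "e \<in> Exps 4"
    show "form 3 (\<lambda>x. if 1 \<le> e \<gamma> then mono (em e) x else 0)"
      using form_mono[OF em3[OF e]] form_zero by (cases "1 \<le> e \<gamma>") simp_all
  qed simp
  have infl: "inflectional_tangent L C" unfolding inflectional_tangent_def
  proof (intro exI conjI allI impI)
    fix s t :: complex assume h: "cvec s (ax \<alpha>) + cvec t (ax \<beta>) = 0"
    have "(cvec s (ax \<alpha>) + cvec t (ax \<beta>)) $ \<alpha> = 0" "(cvec s (ax \<alpha>) + cvec t (ax \<beta>)) $ \<beta> = 0"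
      using h by simp_all
    then show "s = 0" "t = 0" using ne by (simp_all add: cvec_def ax_nth)
  next
    show "L (ax \<alpha>) = 0" "L (ax \<beta>) = 0" unfolding L_def using ne by (simp_all add: ax_nth)
    show "c E031 \<noteq> 0" using c031 unfolding E031_def .
  next
    fix s t :: complex
    define y where "y = cvec s (ax \<alpha>) + cvec t (ax \<beta>)"
    have yv: "y$\<alpha> = s" "y$\<beta> = t" "y$\<gamma> = 0" unfolding y_def cvec_def using ne by (simp_all add: ax_nth)
    have "C y = (\<Sum>e\<in>Exps 4. if e = E031 then c E031 * t^3 else 0)"
      unfolding C_def
    proof (rule sum.cong[OF refl])
      fix e assume e: "e \<in> Exps 4"
      show "c e * (if 1 \<le> e \<gamma> then mono (em e) y else 0) = (if e = E031 then c E031 * t^3 else 0)"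
      proof (cases "c e = 0")
        case True then show ?thesis by auto
      next
        case False
        then have g1: "1 \<le> e \<gamma>" using B1 e by blast
        show ?thesis
        proof (cases "e \<gamma> = 1")
          case True
          then have "e = E031" using B2[OF e False] unfolding E031_def by blast
          then show ?thesis using g1 unfolding mono_abg[OF d3] emv yv by (simp add: E031v)
        next
          case False
          then have "e \<noteq> E031" using E031v by auto
          moreover have "mono (em e) y = 0" using g1 False unfolding mono_abg[OF d3] emv yv by simp
          ultimately show ?thesis by simp
        qed
      qed
    qed
    also have "\<dots> = c E031 * t^3" using E031e by simp
    finally show "C (cvec s (ax \<alpha>) + cvec t (ax \<beta>)) = c E031 * t ^ 3" unfolding y_def .
  next
    show "\<not> mult_ge C (ax \<alpha>) 2"
    proof
      assume "mult_ge C (ax \<alpha>) 2"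
      then obtain q where q: "\<And>\<tau>. C (ax \<alpha> + cvec \<tau> (ax \<gamma>)) = \<tau> ^ 2 * poly q \<tau>"
        unfolding mult_ge_def by blast
      define P where "P = (\<Sum>e\<in>Exps 4. smult (c e) (if 1 \<le> e \<gamma> then MP (em e) (ax \<alpha>) (ax \<gamma>) else 0))"
      have CP: "C (ax \<alpha> + cvec \<tau> (ax \<gamma>)) = poly P \<tau>" for \<tau>
        unfolding C_def P_def poly_sum by (intro sum.cong refl) (simp add: mono_line)
      have "poly P = poly (pCons 0 (pCons 0 q))"
      proof
        fix \<tau> show "poly P \<tau> = poly (pCons 0 (pCons 0 q)) \<tau>"
          using q[of \<tau>] CP[of \<tau>] by (simp add: power2_eq_square mult.assoc)
      qed
      then have "P = pCons 0 (pCons 0 q)" using poly_eq_poly_eq_iff by blast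
      then have "coeff P 1 = 0" by simp
      moreover have "coeff P 1 = c E202"
      proof -
        have "coeff P 1 = (\<Sum>e\<in>Exps 4. if e = E202 then c E202 else 0)"
          unfolding P_def coeff_sum
        proof (rule sum.cong[OF refl])
          fix e assume e: "e \<in> Exps 4"
          have MPv: "MP (em e) (ax \<alpha>) (ax \<gamma>) = (if e \<beta> = 0 then [:0,1:] ^ (e \<gamma> - 1) else 0)"
            unfolding MP_abg[OF d3] emv using ne by (simp add: ax_nth power_0_left one_pCons[symmetric])
          have sum4: "e \<alpha> + e \<beta> + e \<gamma> = 4" using e Exps_abg[OF d3] by blast
          have iff: "(1 \<le> e \<gamma> \<and> e \<beta> = 0 \<and> e \<gamma> - 1 = 1) \<longleftrightarrow> e = E202"
            unfolding E202_def mkE_eq[OF d3] using sum4 by arith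
          show "coeff (smult (c e) (if 1 \<le> e \<gamma> then MP (em e) (ax \<alpha>) (ax \<gamma>) else 0)) 1 = (if e = E202 then c E202 else 0)"
            unfolding MPv using iff[symmetric] by (auto simp: coeff_X_pow)
        qed
        also have "\<dots> = c E202" using E202e by simp
        finally show ?thesis .
      qed
      ultimately show False using c202 unfolding E202_def by simp
    qed
  qed
  show ?thesis unfolding cubic_plus_inflectional_line_def
    using tL L0 tC FLC infl by blast
qed


lemma sort3: fixes t :: "3 \<Rightarrow> real" shows "\<exists>\<alpha> \<beta> \<gamma>. distinct [\<alpha>, \<beta>, \<gamma>] \<and> t \<beta> \<le> t \<alpha> \<and> t \<gamma> \<le> t \<beta>"
proof -
  have d: "distinct [1::3, 2, 3]" "distinct [1::3, 3, 2]" "distinct [2::3, 1, 3]"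
    "distinct [2::3, 3, 1]" "distinct [3::3, 1, 2]" "distinct [3::3, 2, 1]" by simp_all
  show ?thesis
  proof (cases "t 2 \<le> t 1")
    case True
    show ?thesis
    proof (cases "t 3 \<le> t 2")
      case True then show ?thesis using \<open>t 2 \<le> t 1\<close> d(1) by blast
    next
      case False
      show ?thesis
      proof (cases "t 3 \<le> t 1")
        case True then show ?thesis using False d(2) by (intro exI[of _ 1] exI[of _ 3] exI[of _ 2]) auto
      next
        case False then show ?thesis using \<open>t 2 \<le> t 1\<close> d(5) by (intro exI[of _ 3] exI[of _ 1] exI[of _ 2]) auto
      qed
    qed
  next
    case False
    show ?thesis
    proof (cases "t 3 \<le> t 1")
      case True then show ?thesis using False d(3) by (intro exI[of _ 2] exI[of _ 1] exI[of _ 3]) auto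
    next
      case n31: False
      show ?thesis
      proof (cases "t 3 \<le> t 2")
        case True then show ?thesis using n31 d(4) by (intro exI[of _ 2] exI[of _ 3] exI[of _ 1]) auto
      next
        case False then show ?thesis using \<open>\<not> t 2 \<le> t 1\<close> d(6) by (intro exI[of _ 3] exI[of _ 2] exI[of _ 1]) auto
      qed
    qed
  qed
qed

lemma coord_main:
  assumes F: "\<forall>x. F x = (\<Sum>e\<in>Exps 4. c e * mono e x)"
    and a1: "cmod (a$1 * a$2 * a$3) = 1"
    and small: "\<forall>e\<in>Exps 4. c e \<noteq> 0 \<longrightarrow> cmod (mono e a) < 1"
  shows "has_triple_point F \<or> cubic_plus_inflectional_line F"
proof -
  obtain \<alpha> \<beta> \<gamma> where d3: "distinct [\<alpha>, \<beta>, \<gamma>]" and o1: "cmod (a$\<beta>) \<le> cmod (a$\<alpha>)" and o2: "cmod (a$\<gamma>) \<le> cmod (a$\<beta>)"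
    using sort3[of "\<lambda>i. cmod (a$i)"] by blast
  note ne = d3_ne[OF d3]
  have pr: "cmod (a$\<alpha>) * cmod (a$\<beta>) * cmod (a$\<gamma>) = 1"
  proof -
    have "cmod (a$\<alpha>) * cmod (a$\<beta>) * cmod (a$\<gamma>) = (\<Prod>i\<in>UNIV. cmod (a$i))" by (rule prod_abg[OF d3, symmetric])
    also have "\<dots> = cmod (a$1 * a$2 * a$3)" by (simp add: prod3 norm_mult)
    finally show ?thesis using a1 by simp
  qed
  have pos: "0 < cmod (a$i)" for i
  proof -
    have "a$i \<noteq> 0" using a1 exhaust_3[of i] by auto
    then show ?thesis by simp
  qed
  define u where "u i = ln (cmod (a$i))" for i
  have usum: "u \<alpha> + u \<beta> + u \<gamma> = 0"
  proof -
    have "u \<alpha> + u \<beta> + u \<gamma> = ln (cmod (a$\<alpha>) * cmod (a$\<beta>) * cmod (a$\<gamma>))"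
      unfolding u_def using pos by (simp add: ln_mult)
    then show ?thesis using pr by simp
  qed
  have uo: "u \<beta> \<le> u \<alpha>" "u \<gamma> \<le> u \<beta>" unfolding u_def using o1 o2 pos by simp_all
  have W: "real (e \<alpha>) * u \<alpha> + real (e \<beta>) * u \<beta> + real (e \<gamma>) * u \<gamma> < 0" if e: "e \<in> Exps 4" "c e \<noteq> 0" for e
  proof -
    have m: "cmod (mono e a) = cmod (a$\<alpha>) ^ e \<alpha> * cmod (a$\<beta>) ^ e \<beta> * cmod (a$\<gamma>) ^ e \<gamma>"
      unfolding mono_abg[OF d3] by (simp add: norm_mult norm_power)
    have lt: "cmod (mono e a) < 1" using small e by blast
    have "0 < cmod (mono e a)" unfolding m using pos by simp
    then have "ln (cmod (mono e a)) < 0" using lt by simp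
    moreover have "ln (cmod (mono e a)) = real (e \<alpha>) * u \<alpha> + real (e \<beta>) * u \<beta> + real (e \<gamma>) * u \<gamma>"
      unfolding m u_def using pos by (simp add: ln_mult ln_realpow)
    ultimately show ?thesis by simp
  qed
  have s4: "e \<alpha> + e \<beta> + e \<gamma> = 4" if "e \<in> Exps 4" for e using that Exps_abg[OF d3] by blast
  show ?thesis
  proof (cases "\<forall>e\<in>Exps 4. c e \<noteq> 0 \<longrightarrow> e \<alpha> \<le> 1")
    case True then show ?thesis using caseA[OF F d3] by blast
  next
    case False
    then obtain e0 where e0: "e0 \<in> Exps 4" "c e0 \<noteq> 0" "\<not> e0 \<alpha> \<le> 1" by blast
    have c1: "e0 \<alpha> = 2 \<and> e0 \<beta> = 0 \<and> e0 \<gamma> = 2 \<and> 0 < u \<beta>"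
      using classify1[OF s4[OF e0(1)] uo usum W[OF e0(1,2)]] e0(3) by blast
    then have "e0 = mkE \<alpha> \<beta> \<gamma> 2 0 2" using mkE_eq[OF d3] by blast
    then have c202: "c (mkE \<alpha> \<beta> \<gamma> 2 0 2) \<noteq> 0" using e0 by simp
    have ub: "0 < u \<beta>" using c1 by blast
    have props: "(e \<alpha> \<le> 1 \<or> (e \<alpha> = 2 \<and> e \<beta> = 0 \<and> e \<gamma> = 2)) \<and> \<not>(e \<alpha> = 1 \<and> e \<beta> = 3) \<and> \<not>(e \<alpha> = 1 \<and> e \<beta> = 2 \<and> e \<gamma> = 1) \<and> e \<beta> \<noteq> 4"
      if e: "e \<in> Exps 4" "c e \<noteq> 0" for e
      using classify1[OF s4[OF e(1)] uo usum W[OF e]] classify2[OF s4[OF e(1)] uo usum W[OF e] ub] by blast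
    have B1: "1 \<le> e \<gamma>" if e: "e \<in> Exps 4" "c e \<noteq> 0" for e
      using props[OF e] s4[OF e(1)] by arith
    have B2: "e = mkE \<alpha> \<beta> \<gamma> 0 3 1" if e: "e \<in> Exps 4" "c e \<noteq> 0" "e \<gamma> = 1" for e
    proof -
      have "e \<alpha> = 0 \<and> e \<beta> = 3" using props[OF e(1,2)] s4[OF e(1)] e(3) by arith
      then show ?thesis using e(3) mkE_eq[OF d3] by blast
    qed
    show ?thesis
    proof (cases "c (mkE \<alpha> \<beta> \<gamma> 0 3 1) = 0")
      case True
      have "2 \<le> e \<gamma>" if e: "e \<in> Exps 4" "c e \<noteq> 0" for e
      proof (rule ccontr)
        assume "\<not> 2 \<le> e \<gamma>"
        then have "e \<gamma> = 1" using B1[OF e] by arith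
        then have "e = mkE \<alpha> \<beta> \<gamma> 0 3 1" using B2[OF e] by blast
        then show False using True e(2) by simp
      qed
      then show ?thesis using tp_gamma2[OF F d3] by blast
    next
      case False
      have "cubic_plus_inflectional_line F"
      proof (rule flex_case[OF F d3])
        show "\<And>e. e \<in> Exps 4 \<Longrightarrow> c e \<noteq> 0 \<Longrightarrow> 1 \<le> e \<gamma>" by (rule B1)
        show "\<And>e. e \<in> Exps 4 \<Longrightarrow> c e \<noteq> 0 \<Longrightarrow> e \<gamma> = 1 \<Longrightarrow> e = mkE \<alpha> \<beta> \<gamma> 0 3 1" by (rule B2)
      qed (rule c202, rule False)
      then show ?thesis by blast
    qed
  qed
qed

lemma cvec_smult: "cvec t v = t *s v"
  unfolding cvec_def by (simp add: vec_eq_iff)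

lemma mult_ge_pull:
  assumes "mult_ge f (M *v p) m" shows "mult_ge (\<lambda>x. f (M *v x)) p m"
  unfolding mult_ge_def
proof
  fix x
  obtain q where q: "\<forall>t. f (M *v p + cvec t (M *v x)) = t ^ m * poly q t"
    using assms unfolding mult_ge_def by blast
  have "M *v (p + cvec t x) = M *v p + cvec t (M *v x)" for t
    by (simp add: cvec_smult matrix_vector_right_distrib vector_scalar_commute)
  then show "\<exists>q. \<forall>t. f (M *v (p + cvec t x)) = t ^ m * poly q t" using q by auto
qed

lemma mult_ge_push:
  assumes "mult_ge (\<lambda>x. f (M *v x)) p m" and inv: "M ** Mi = mat 1"
  shows "mult_ge f (M *v p) m"
  unfolding mult_ge_def
proof
  fix x
  obtain q where q: "\<forall>t. f (M *v (p + cvec t (Mi *v x))) = t ^ m * poly q t"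
    using assms unfolding mult_ge_def by blast
  have "M *v (p + cvec t (Mi *v x)) = M *v p + cvec t x" for t
    by (simp add: cvec_smult matrix_vector_right_distrib vector_scalar_commute matrix_vector_mul_assoc inv)
  then show "\<exists>q. \<forall>t. f (M *v p + cvec t x) = t ^ m * poly q t" using q by metis
qed

lemma transport:
  fixes K :: "complex^3^3"
  assumes dK: "det K \<noteq> 0"
    and H: "has_triple_point (\<lambda>x. F (K *v x)) \<or> cubic_plus_inflectional_line (\<lambda>x. F (K *v x))"
  shows "has_triple_point F \<or> cubic_plus_inflectional_line F"
proof -
  have "invertible K" using dK invertible_det_nz by blast
  then obtain Ki where KKi: "K ** Ki = mat 1" and KiK: "Ki ** K = mat 1" unfolding invertible_def by blast
  have KKv: "K *v (Ki *v y) = y" for y by (simp add: matrix_vector_mul_assoc KKi)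
  have KiKv: "Ki *v (K *v y) = y" for y by (simp add: matrix_vector_mul_assoc KiK)
  from H show ?thesis
  proof
    assume "has_triple_point (\<lambda>x. F (K *v x))"
    then obtain p where p0: "p \<noteq> 0" and mp: "mult_ge (\<lambda>x. F (K *v x)) p 3" unfolding has_triple_point_def by blast
    have "K *v p \<noteq> 0" using p0 KiKv[of p] by auto
    then show ?thesis unfolding has_triple_point_def using mult_ge_push[OF mp KKi] by blast
  next
    assume "cubic_plus_inflectional_line (\<lambda>x. F (K *v x))"
    then obtain L' C' where tL: "ternary_form 1 L'" and L0: "L' \<noteq> (\<lambda>_. 0)" and tC: "ternary_form 3 C'"
      and FLC: "\<forall>x. F (K *v x) = L' x * C' x" and inf: "inflectional_tangent L' C'"
      unfolding cubic_plus_inflectional_line_def by blast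
    obtain p q a where ind: "\<forall>s t. cvec s p + cvec t q = 0 \<longrightarrow> s = 0 \<and> t = 0" and Lp: "L' p = 0" "L' q = 0"
      and a0: "a \<noteq> 0" and Cst: "\<forall>s t. C' (cvec s p + cvec t q) = a * t ^ 3" and nm: "\<not> mult_ge C' p 2"
      using inf unfolding inflectional_tangent_def by blast
    define L where "L y = L' (Ki *v y)" for y
    define C where "C y = C' (Ki *v y)" for y
    have "ternary_form 1 L" using tL unfolding ternary_form_iff L_def[abs_def] by (rule form_subst)
    moreover have "ternary_form 3 C" using tC unfolding ternary_form_iff C_def[abs_def] by (rule form_subst)
    moreover have "L \<noteq> (\<lambda>_. 0)"
    proof
      assume "L = (\<lambda>_. 0)"
      then have "L' x = 0" for x using fun_cong[of L "\<lambda>_. 0" "K *v x"] unfolding L_def KiKv by simp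
      then show False using L0 by auto
    qed
    moreover have "F y = L y * C y" for y using FLC[rule_format, of "Ki *v y"] unfolding L_def C_def KKv by simp
    moreover have "inflectional_tangent L C" unfolding inflectional_tangent_def
    proof (intro exI conjI allI impI)
      fix s t assume "cvec s (K *v p) + cvec t (K *v q) = 0"
      then have "K *v (cvec s p + cvec t q) = 0"
        by (simp add: cvec_smult matrix_vector_right_distrib vector_scalar_commute)
      then have "cvec s p + cvec t q = 0" using KiKv[of "cvec s p + cvec t q"] by simp
      then show "s = 0" "t = 0" using ind by blast+
    next
      show "L (K *v p) = 0" "L (K *v q) = 0" unfolding L_def KiKv using Lp by simp_all
      show "a \<noteq> 0" by (rule a0)
    next
      fix s t
      have "Ki *v (cvec s (K *v p) + cvec t (K *v q)) = cvec s p + cvec t q"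
        by (simp add: cvec_smult matrix_vector_right_distrib vector_scalar_commute KiKv)
      then show "C (cvec s (K *v p) + cvec t (K *v q)) = a * t ^ 3" unfolding C_def using Cst by simp
    next
      show "\<not> mult_ge C (K *v p) 2"
      proof
        assume "mult_ge C (K *v p) 2"
        then have "mult_ge (\<lambda>x. C (K *v x)) p 2" by (rule mult_ge_pull)
        moreover have "(\<lambda>x. C (K *v x)) = C'" unfolding C_def KiKv by simp
        ultimately show False using nm by simp
      qed
    qed
    ultimately show ?thesis unfolding cubic_plus_inflectional_line_def by blast
  qed
qed

theorem core_unstable:
  assumes T: "ternary_form 4 F" and U: "quartic_unstable F"
  shows "has_triple_point F \<or> cubic_plus_inflectional_line F"
proof -
  have F: "form 4 F" using T ternary_form_iff by blast
  obtain K a where dK: "det K \<noteq> 0" and a1: "cmod (a$1 * a$2 * a$3) = 1"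
    and sm: "\<forall>e\<in>Exps 4. coef (\<lambda>x. F (K *v x)) e \<noteq> 0 \<longrightarrow> cmod (mono e a) < 1"
    using unstable_reduce[OF F U] by blast
  have FK: "form 4 (\<lambda>x. F (K *v x))" by (rule form_subst[OF F])
  have rep: "\<forall>x. F (K *v x) = (\<Sum>e\<in>Exps 4. coef (\<lambda>x. F (K *v x)) e * mono e x)"
    using form4_repr[OF FK] by blast
  show ?thesis using transport[OF dK coord_main[OF rep a1 sm]] .
qed


lemma form_lin3: "form 1 (\<lambda>x. x$1 * a + x$2 * b + x$3 * c)"
proof -
  have "form 1 (\<lambda>x. a * x$1)" "form 1 (\<lambda>x. b * x$2)" "form 1 (\<lambda>x. c * x$3)"
    by (intro form_cmult form_coord)+
  then have "form 1 (\<lambda>x. a * x$1 + b * x$2 + c * x$3)" by (intro form_add)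
  then show ?thesis by (simp add: mult.commute)
qed

lemma disc_form: "form 4 (net_discriminant A1 A2 A3)"
proof -
  have ent: "(cmat (x$1) A1 + cmat (x$2) A2 + cmat (x$3) A3) $ i $ j = x$1 * A1$i$j + x$2 * A2$i$j + x$3 * A3$i$j" for x i j
    by (simp add: cmat_def)
  have "form (\<Sum>i\<in>(UNIV::4 set). 1) (\<lambda>x. \<Prod>i\<in>UNIV. (cmat (x$1) A1 + cmat (x$2) A2 + cmat (x$3) A3) $ i $ p i)" for p :: "4 \<Rightarrow> 4"
    unfolding ent by (intro form_prod form_lin3) simp
  then have pf: "form 4 (\<lambda>x. \<Prod>i\<in>UNIV. (cmat (x$1) A1 + cmat (x$2) A2 + cmat (x$3) A3) $ i $ p i)" for p :: "4 \<Rightarrow> 4"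
    by simp
  have "form 4 (\<lambda>x. \<Sum>p\<in>{p. p permutes (UNIV::4 set)}. of_int (sign p) * (\<Prod>i\<in>UNIV. (cmat (x$1) A1 + cmat (x$2) A2 + cmat (x$3) A3) $ i $ p i))"
    by (intro form_sum form_cmult pf) simp
  then show ?thesis unfolding net_discriminant_def[abs_def] det_def .
qed

lemma form_poly_line: assumes "form d f" shows "\<exists>P. \<forall>t. f (p + cvec t x) = poly P t"
proof -
  obtain c where c: "\<forall>x. f x = (\<Sum>e\<in>Exps d. c e * mono e x)" using assms unfolding form_def by blast
  show ?thesis
    by (rule exI[of _ "\<Sum>e\<in>Exps d. smult (c e) (MP e p x)"]) (simp add: c mono_line poly_sum)
qed

lemma X_dvd_iff: "[:0,1:] dvd (P::complex poly) \<longleftrightarrow> poly P 0 = 0"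
  using poly_eq_0_iff_dvd[of P 0] by simp

lemma sq_dvd: fixes P :: "complex poly" assumes "[:0,1:] ^ 3 dvd P ^ 2" shows "[:0,1:] ^ 2 dvd P"
proof -
  have "[:0,1:] dvd P ^ 2" using assms by (meson dvd_power dvd_trans zero_less_numeral)
  then have "poly P 0 = 0" unfolding X_dvd_iff by (simp add: poly_power)
  then obtain P1 where P1: "P = [:0,1:] * P1" using X_dvd_iff by (metis dvdE)
  have "[:0,1:] ^ 2 * [:0,1:] dvd [:0,1:] ^ 2 * P1 ^ 2"
    using assms unfolding P1 by (simp add: power_mult_distrib power3_eq_cube power2_eq_square mult.assoc)
  then have "[:0,1:] dvd P1 ^ 2" by (subst (asm) dvd_mult_cancel_left) simp
  then have "poly P1 0 = 0" unfolding X_dvd_iff by (simp add: poly_power)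
  then have "[:0,1:] dvd P1" using X_dvd_iff by blast
  then have "[:0,1:] * [:0,1:] dvd [:0,1:] * P1" by (rule mult_dvd_mono[OF dvd_refl])
  then show ?thesis unfolding P1 power2_eq_square .
qed

lemma form1_linear: assumes "ternary_form 1 L" shows "L (u + cvec t v) = L u + t * L v"
proof -
  obtain c where c: "\<forall>x. L x = (\<Sum>a\<le>1. \<Sum>b\<le>1 - a. c a b * x$1 ^ a * x$2 ^ b * x$3 ^ (1 - a - b))"
    using assms unfolding ternary_form_def by blast
  have "L x = c 0 0 * x$3 + c 0 1 * x$2 + c 1 0 * x$1" for x using c by simp
  then show ?thesis by (simp add: cvec_def algebra_simps)
qed

lemma part2_core:
  assumes Q2: "ternary_form 2 Q" and sm: "smooth_curve Q" and FQ: "\<forall>x. F x = (Q x)^2"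
    and H: "has_triple_point F \<or> cubic_plus_inflectional_line F"
  shows False
  using H
proof
  assume "has_triple_point F"
  then obtain p where p0: "p \<noteq> 0" and mp: "mult_ge F p 3" unfolding has_triple_point_def by blast
  have "mult_ge Q p 2" unfolding mult_ge_def
  proof
    fix x
    obtain P where P: "\<forall>t. Q (p + cvec t x) = poly P t"
      using form_poly_line[of 2 Q p x] Q2 ternary_form_iff by blast
    obtain q where q: "\<forall>t. F (p + cvec t x) = t ^ 3 * poly q t" using mp unfolding mult_ge_def by blast
    have "poly (P ^ 2) = poly ([:0,1:] ^ 3 * q)"
    proof
      fix t show "poly (P ^ 2) t = poly ([:0,1:] ^ 3 * q) t"
        using P q FQ by (simp add: poly_power)
    qed
    then have "P ^ 2 = [:0,1:] ^ 3 * q" using poly_eq_poly_eq_iff by blast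
    then have "[:0,1:] ^ 3 dvd P ^ 2" by simp
    then have "[:0,1:] ^ 2 dvd P" by (rule sq_dvd)
    then obtain r where "P = [:0,1:] ^ 2 * r" by (elim dvdE)
    then show "\<exists>q. \<forall>t. Q (p + cvec t x) = t ^ 2 * poly q t" using P by (auto simp: poly_power)
  qed
  then show False using sm p0 unfolding smooth_curve_def by blast
next
  assume "cubic_plus_inflectional_line F"
  then obtain L C where tL: "ternary_form 1 L" and L0: "L \<noteq> (\<lambda>_. 0)" and tC: "ternary_form 3 C"
      and FLC: "\<forall>x. F x = L x * C x" and inf: "inflectional_tangent L C"
      unfolding cubic_plus_inflectional_line_def by blast
  obtain p q a where Lp: "L q = 0" and a0: "a \<noteq> 0" and Cst: "\<forall>s t. C (cvec s p + cvec t q) = a * t ^ 3"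
    using inf unfolding inflectional_tangent_def by blast
  have "cvec 0 p + cvec 1 q = q" by (simp add: cvec_def vec_eq_iff)
  then have Cq: "C q = a" using Cst[rule_format, of 0 1] by simp
  obtain r where Lr: "L r \<noteq> 0" using L0 by auto
  obtain P where P: "\<forall>t. Q (q + cvec t r) = poly P t"
    using form_poly_line[of 2 Q q r] Q2 ternary_form_iff by blast
  obtain R where R: "\<forall>t. C (q + cvec t r) = poly R t"
    using form_poly_line[of 3 C q r] tC ternary_form_iff by blast
  have "poly (P ^ 2) = poly ([:0, L r:] * R)"
  proof
    fix t
    have "F (q + cvec t r) = (L q + t * L r) * C (q + cvec t r)" using FLC form1_linear[OF tL] by simp
    then show "poly (P ^ 2) t = poly ([:0, L r:] * R) t" using P R FQ Lp by (simp add: poly_power algebra_simps)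
  qed
  then have "P ^ 2 = [:0, L r:] * R" using poly_eq_poly_eq_iff by blast
  also have "[:0, L r:] * R = [:0,1:] * smult (L r) R"
    by (subst poly_eq_poly_eq_iff[symmetric]) (simp add: fun_eq_iff algebra_simps)
  finally have PR: "P ^ 2 = [:0,1:] * smult (L r) R" .
  have "poly P 0 = 0"
  proof -
    have "poly (P ^ 2) 0 = 0" unfolding PR by simp
    then show ?thesis by (simp add: poly_power)
  qed
  then have "[:0,1:] dvd P" using X_dvd_iff by blast
  then have "[:0,1:] * [:0,1:] dvd P * P" using mult_dvd_mono by blast
  then have "[:0,1:] * [:0,1:] dvd P ^ 2" by (simp only: power2_eq_square)
  then have "[:0,1:] dvd smult (L r) R" unfolding PR by (subst (asm) dvd_mult_cancel_left) simp
  then have "poly (smult (L r) R) 0 = 0" using X_dvd_iff by blast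
  moreover have "poly R 0 = a"
  proof -
    have "q + cvec 0 r = q" by (simp add: cvec_def vec_eq_iff)
    then show ?thesis using R[rule_format, of 0] Cq by simp
  qed
  ultimately show False using Lr a0 by simp
qed


definition mq :: "complex^4^4 \<Rightarrow> 4 \<times> 4 \<Rightarrow> complex" where "mq A e = A $ fst e $ snd e"

lemma plucker_mq: "plucker A1 A2 A3 e1 e2 e3 =
   mq A1 e1 * (mq A2 e2 * mq A3 e3 - mq A2 e3 * mq A3 e2)
 - mq A1 e2 * (mq A2 e1 * mq A3 e3 - mq A2 e3 * mq A3 e1)
 + mq A1 e3 * (mq A2 e1 * mq A3 e2 - mq A2 e2 * mq A3 e1)"
  unfolding plucker_def mq_def Let_def by simp

lemma cmat_mq: "mq (cmat a A + cmat b B + cmat c C) f = a * mq A f + b * mq B f + c * mq C f"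
  by (simp add: mq_def cmat_def)

lemma mat_eq_mq: "(A::complex^4^4) = B \<longleftrightarrow> (\<forall>f. mq A f = mq B f)"
  unfolding mq_def vec_eq_iff by auto

lemma minor_nonzero:
  assumes indep: "\<forall>a b c. cmat a B1 + cmat b B2 + cmat c B3 = 0 \<longrightarrow> a = 0 \<and> b = 0 \<and> c = 0"
  shows "\<exists>e1 e2 e3. plucker B1 B2 B3 e1 e2 e3 \<noteq> 0"
proof (rule ccontr)
  assume "\<not> ?thesis" then have Z: "\<And>e1 e2 e3. plucker B1 B2 B3 e1 e2 e3 = 0" by blast
  have dep: "False" if h: "\<forall>f. a * mq B1 f + b * mq B2 f + c * mq B3 f = 0" and nz: "\<not>(a = 0 \<and> b = 0 \<and> c = 0)" for a b c
  proof -
    have "cmat a B1 + cmat b B2 + cmat c B3 = 0" unfolding mat_eq_mq cmat_mq using h by (simp add: mq_def)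
    then show False using indep nz by blast
  qed
  show False
  proof (cases "\<forall>f. mq B1 f = 0")
    case True then show False using dep[of 1 0 0] by simp
  next
    case False then obtain e1 where e1: "mq B1 e1 \<noteq> 0" by blast
    show False
    proof (cases "\<forall>f. mq B1 e1 * mq B2 f - mq B1 f * mq B2 e1 = 0")
      case True
      have "\<forall>f. (- mq B2 e1) * mq B1 f + mq B1 e1 * mq B2 f + 0 * mq B3 f = 0"
        using True by (simp add: algebra_simps)
      then show False using dep e1 by blast
    next
      case False
      then obtain e2 where e2: "mq B1 e1 * mq B2 e2 - mq B1 e2 * mq B2 e1 \<noteq> 0" by blast
      have "\<forall>f. (mq B2 e1 * mq B3 e2 - mq B2 e2 * mq B3 e1) * mq B1 f
              + (mq B1 e2 * mq B3 e1 - mq B1 e1 * mq B3 e2) * mq B2 f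
              + (mq B1 e1 * mq B2 e2 - mq B1 e2 * mq B2 e1) * mq B3 f = 0"
      proof
        fix f show "(mq B2 e1 * mq B3 e2 - mq B2 e2 * mq B3 e1) * mq B1 f
              + (mq B1 e2 * mq B3 e1 - mq B1 e1 * mq B3 e2) * mq B2 f
              + (mq B1 e1 * mq B2 e2 - mq B1 e2 * mq B2 e1) * mq B3 f = 0"
          using Z[of e1 e2 f] unfolding plucker_mq by (simp add: algebra_simps)
      qed
      then show False using dep e2 by blast
    qed
  qed
qed

lemma cmat_mult_right: "(X::complex^4^4) ** cmat a Y = cmat a (X ** Y)"
  by (simp add: cmat_def matrix_matrix_mult_def vec_eq_iff sum_distrib_left mult.left_commute)

lemma cmat_mult_left: "cmat a (X::complex^4^4) ** Y = cmat a (X ** Y)"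
  by (simp add: cmat_def matrix_matrix_mult_def vec_eq_iff sum_distrib_left mult.assoc)

lemma matrix_add_rdistrib': "((B::complex^4^4) + C) ** A = B ** A + C ** A"
  by (simp add: matrix_matrix_mult_def vec_eq_iff sum.distrib distrib_right)

lemma qa_lin: "cmat a (quad_act g A) + cmat b (quad_act g B) + cmat c (quad_act g C) = quad_act g (cmat a A + cmat b B + cmat c C)"
  unfolding quad_act_def by (simp add: matrix_add_ldistrib matrix_add_rdistrib' cmat_mult_right cmat_mult_left)

lemma det_qa: "det g = 1 \<Longrightarrow> det (quad_act g M) = det M"
  unfolding quad_act_def by (simp add: det_mul det_transpose)

lemma qa_zero: assumes "det g = 1" "quad_act g M = 0" shows "M = 0"
proof -
  have "invertible g" by (simp add: invertible_det_nz assms(1))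
  then obtain gi where g1: "g ** gi = mat 1" unfolding invertible_def by blast
  have "invertible (transpose g)" by (simp add: invertible_det_nz assms(1) det_transpose)
  then obtain ti where t1: "ti ** transpose g = mat 1" unfolding invertible_def by blast
  have "M = (ti ** transpose g) ** M ** (g ** gi)" by (simp add: t1 g1)
  also have "\<dots> = ti ** (quad_act g M) ** gi" unfolding quad_act_def by (simp add: matrix_mul_assoc)
  finally show ?thesis using assms(2) by simp
qed

lemma det_bound4:
  fixes M :: "complex^4^4" assumes b: "\<And>i j. cmod (M$i$j) \<le> R"
  shows "cmod (det M) \<le> real (card {p. p permutes (UNIV::4 set)}) * R ^ 4"
proof -
  have R0: "0 \<le> R" using b[of 1 1] norm_ge_zero order_trans by blast
  have "cmod (det M) \<le> (\<Sum>p\<in>{p. p permutes (UNIV::4 set)}. cmod (of_int (sign p) * (\<Prod>i\<in>UNIV. M$i$p i)))"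
    unfolding det_def by (rule norm_sum)
  also have "\<dots> \<le> (\<Sum>p\<in>{p. p permutes (UNIV::4 set)}. R ^ 4)"
  proof (rule sum_mono)
    fix p
    have "cmod (of_int (sign p) * (\<Prod>i\<in>UNIV. M$i$p i)) = (\<Prod>i\<in>UNIV. cmod (M$i$p i))"
      by (simp add: norm_mult prod_norm[symmetric] sign_def)
    also have "\<dots> \<le> (\<Prod>i\<in>(UNIV::4 set). R)" by (intro prod_mono conjI norm_ge_zero b)
    also have "\<dots> = R ^ 4" by simp
    finally show "cmod (of_int (sign p) * (\<Prod>i\<in>UNIV. M$i$p i)) \<le> R ^ 4" .
  qed
  also have "\<dots> = real (card {p. p permutes (UNIV::4 set)}) * R ^ 4" by simp
  finally show ?thesis .
qed


lemma step3:
  fixes g :: "complex^4^4"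
  assumes dg: "det g = 1"
    and P0: "plucker (quad_act g A1) (quad_act g A2) (quad_act g A3) e1 e2 e3 \<noteq> 0"
    and maxE: "\<And>f1 f2 f3. cmod (plucker (quad_act g A1) (quad_act g A2) (quad_act g A3) f1 f2 f3)
                 \<le> cmod (plucker (quad_act g A1) (quad_act g A2) (quad_act g A3) e1 e2 e3)"
  shows "\<exists>h::complex^3^3. det h = 1 \<and> (\<forall>y. cmod (net_discriminant A1 A2 A3 (h *v y))
      \<le> real (card {p. p permutes (UNIV::4 set)}) *
         ((cmod (plucker (quad_act g A1) (quad_act g A2) (quad_act g A3) e1 e2 e3)) powr (1/3) * (\<Sum>j\<in>UNIV. cmod (y$j))) ^ 4)"
proof -
  define B1 where "B1 = quad_act g A1"
  define B2 where "B2 = quad_act g A2"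
  define B3 where "B3 = quad_act g A3"
  define P where "P = plucker B1 B2 B3 e1 e2 e3"
  have P0': "P \<noteq> 0" using P0 unfolding P_def B1_def B2_def B3_def .
  define N :: "complex^3^3" where "N = (\<chi> k i. mq (if k = 1 then B1 else if k = 2 then B2 else B3) (if i = 1 then e1 else if i = 2 then e2 else e3))"
  have detN: "det N = P" unfolding N_def P_def det_3 plucker_mq by (simp add: algebra_simps)
  define X1 where "X1 f = plucker B1 B2 B3 f e2 e3 / P" for f
  define X2 where "X2 f = plucker B1 B2 B3 e1 f e3 / P" for f
  define X3 where "X3 f = plucker B1 B2 B3 e1 e2 f / P" for f
  have cr: "mq B f = mq B e1 * X1 f + mq B e2 * X2 f + mq B e3 * X3 f" if "B = B1 \<or> B = B2 \<or> B = B3" for B f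
  proof -
    have "mq B f * P = mq B e1 * plucker B1 B2 B3 f e2 e3 + mq B e2 * plucker B1 B2 B3 e1 f e3 + mq B e3 * plucker B1 B2 B3 e1 e2 f"
      using that unfolding P_def plucker_mq by (elim disjE) (simp_all add: algebra_simps)
    then show ?thesis unfolding X1_def X2_def X3_def using P0' by (simp add: field_simps)
  qed
  have Xb: "cmod (X1 f) \<le> 1" "cmod (X2 f) \<le> 1" "cmod (X3 f) \<le> 1" for f
    unfolding X1_def X2_def X3_def using maxE P0' unfolding P_def B1_def B2_def B3_def
    by (simp_all add: norm_divide divide_le_eq_1)
  define T where "T = transpose N"
  have "det T \<noteq> 0" unfolding T_def det_transpose detN using P0' .
  then have "invertible T" using invertible_det_nz by blast
  then obtain Ti where TTi: "T ** Ti = mat 1" unfolding invertible_def by blast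
  have dTi: "det T * det Ti = 1" using TTi by (metis det_I det_mul)
  define \<mu> where "\<mu> = exp (Ln P / 3)"
  have mu3: "\<mu> ^ 3 = P"
  proof -
    have "\<mu> ^ 3 = exp (of_nat 3 * (Ln P / 3))" unfolding \<mu>_def by (rule exp_of_nat_mult[symmetric])
    also have "\<dots> = exp (Ln P)" by simp
    also have "\<dots> = P" using P0' by simp
    finally show ?thesis .
  qed
  have mun: "cmod \<mu> = (cmod P) powr (1/3)"
    unfolding \<mu>_def norm_exp_eq_Re using P0' by (simp add: Re_Ln powr_def)
  define h where "h = (\<chi> i j. \<mu> * Ti$i$j)"
  have dh: "det h = 1"
  proof -
    have "det h = \<mu> ^ 3 * det Ti" unfolding h_def det_3 by (simp add: algebra_simps power3_eq_cube)
    also have "\<dots> = 1" using mu3 dTi unfolding T_def det_transpose detN by simp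
    finally show ?thesis .
  qed
  show ?thesis
  proof (intro exI conjI allI)
    show "det h = 1" by (rule dh)
    fix y :: "complex^3"
    define z where "z = h *v y"
    have hz: "z = \<mu> *s (Ti *v y)" unfolding z_def h_def
      by (simp add: vec_eq_iff matrix_vector_mult_def sum_distrib_left mult.assoc)
    have Tz: "T *v z = \<mu> *s y" unfolding hz vector_scalar_commute matrix_vector_mul_assoc TTi by simp
    define M where "M = cmat (z$1) B1 + cmat (z$2) B2 + cmat (z$3) B3"
    have dM: "net_discriminant A1 A2 A3 z = det M"
      unfolding net_discriminant_def M_def B1_def B2_def B3_def qa_lin det_qa[OF dg] ..
    have Tzc: "(T *v z)$1 = mq B1 e1 * z$1 + mq B2 e1 * z$2 + mq B3 e1 * z$3"
              "(T *v z)$2 = mq B1 e2 * z$1 + mq B2 e2 * z$2 + mq B3 e2 * z$3"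
              "(T *v z)$3 = mq B1 e3 * z$1 + mq B2 e3 * z$2 + mq B3 e3 * z$3"
      unfolding T_def N_def by (simp_all add: matrix_vector_mult_def sum_3 transpose_def)
    have Mf: "mq M f = (T *v z)$1 * X1 f + (T *v z)$2 * X2 f + (T *v z)$3 * X3 f" for f
      unfolding M_def cmat_mq Tzc using cr[of B1 f] cr[of B2 f] cr[of B3 f] by (simp add: algebra_simps)
    have Mb: "cmod (M$i$j) \<le> cmod \<mu> * (\<Sum>j\<in>UNIV. cmod (y$j))" for i j
    proof -
      have "M$i$j = \<mu> * (y$1 * X1 (i,j) + y$2 * X2 (i,j) + y$3 * X3 (i,j))"
        using Mf[of "(i,j)"] unfolding Tz by (simp add: mq_def algebra_simps)
      also have "cmod \<dots> \<le> cmod \<mu> * (cmod (y$1) * 1 + cmod (y$2) * 1 + cmod (y$3) * 1)"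
        unfolding norm_mult
        by (intro mult_left_mono order_trans[OF norm_triangle_ineq] add_mono order_trans[OF norm_triangle_ineq]
             mult_left_mono) (simp_all add: norm_mult Xb mult_left_le)
      finally show ?thesis by (simp add: sum_3)
    qed
    have "cmod (det M) \<le> real (card {p. p permutes (UNIV::4 set)}) * (cmod \<mu> * (\<Sum>j\<in>UNIV. cmod (y$j))) ^ 4"
      by (rule det_bound4) (rule Mb)
    then show "cmod (net_discriminant A1 A2 A3 (h *v y))
      \<le> real (card {p. p permutes (UNIV::4 set)}) *
         ((cmod (plucker (quad_act g A1) (quad_act g A2) (quad_act g A3) e1 e2 e3)) powr (1/3) * (\<Sum>j\<in>UNIV. cmod (y$j))) ^ 4"
      unfolding z_def[symmetric] dM mun P_def B1_def B2_def B3_def .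
  qed
qed


lemma net_to_disc:
  assumes net: "\<forall>a b c :: complex. cmat a A1 + cmat b A2 + cmat c A3 = 0 \<longrightarrow> a = 0 \<and> b = 0 \<and> c = 0"
    and U: "net_unstable A1 A2 A3"
  shows "quartic_unstable (net_discriminant A1 A2 A3)"
proof -
  obtain g :: "nat \<Rightarrow> complex^4^4" where g1: "\<And>n. det (g n) = 1"
    and pl: "\<And>e1 e2 e3. (\<lambda>n. plucker (quad_act (g n) A1) (quad_act (g n) A2) (quad_act (g n) A3) e1 e2 e3) \<longlonglongrightarrow> 0"
    using U unfolding net_unstable_def by blast
  define PL where "PL n E = plucker (quad_act (g n) A1) (quad_act (g n) A2) (quad_act (g n) A3) (fst E) (fst (snd E)) (snd (snd E))" for n E
  have ex: "\<exists>E. PL n E \<noteq> 0" for n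
  proof -
    have "\<forall>a b c. cmat a (quad_act (g n) A1) + cmat b (quad_act (g n) A2) + cmat c (quad_act (g n) A3) = 0 \<longrightarrow> a = 0 \<and> b = 0 \<and> c = 0"
      unfolding qa_lin using qa_zero[OF g1] net by blast
    then obtain e1 e2 e3 where "plucker (quad_act (g n) A1) (quad_act (g n) A2) (quad_act (g n) A3) e1 e2 e3 \<noteq> 0"
      using minor_nonzero by blast
    then have "PL n (e1, e2, e3) \<noteq> 0" unfolding PL_def by simp
    then show ?thesis by blast
  qed
  have "\<forall>n. \<exists>E. \<forall>E'. cmod (PL n E') \<le> cmod (PL n E)"
  proof
    fix n show "\<exists>E. \<forall>E'. cmod (PL n E') \<le> cmod (PL n E)" by (rule finite_argmax)
  qed
  then obtain E where maxE: "\<And>n E'. cmod (PL n E') \<le> cmod (PL n (E n))" by metis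
  have nz: "PL n (E n) \<noteq> 0" for n
  proof
    assume "PL n (E n) = 0"
    then have "PL n E' = 0" for E' using maxE[of n E'] by simp
    then show False using ex[of n] by blast
  qed
  have m0: "(\<lambda>n. cmod (PL n (E n))) \<longlonglongrightarrow> 0"
  proof (rule Lim_null_comparison)
    show "\<forall>\<^sub>F n in sequentially. norm (cmod (PL n (E n))) \<le> (\<Sum>E'\<in>UNIV. cmod (PL n E'))"
      by (intro always_eventually allI, simp, rule member_le_sum) auto
    show "(\<lambda>n. \<Sum>E'\<in>UNIV. cmod (PL n E')) \<longlonglongrightarrow> 0"
    proof (rule tendsto_null_sum)
      fix E' :: "(4 \<times> 4) \<times> (4 \<times> 4) \<times> (4 \<times> 4)"
      show "(\<lambda>n. cmod (PL n E')) \<longlonglongrightarrow> 0" unfolding PL_def by (rule tendsto_norm_zero[OF pl])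
    qed
  qed
  define C where "C = real (card {p. p permutes (UNIV::4 set)})"
  have "\<forall>n. \<exists>h::complex^3^3. det h = 1 \<and> (\<forall>y. cmod (net_discriminant A1 A2 A3 (h *v y))
      \<le> C * ((cmod (PL n (E n))) powr (1/3) * (\<Sum>j\<in>UNIV. cmod (y$j))) ^ 4)"
  proof
    fix n
    show "\<exists>h::complex^3^3. det h = 1 \<and> (\<forall>y. cmod (net_discriminant A1 A2 A3 (h *v y))
      \<le> C * ((cmod (PL n (E n))) powr (1/3) * (\<Sum>j\<in>UNIV. cmod (y$j))) ^ 4)"
      unfolding C_def PL_def
      by (rule step3[OF g1]) (use nz maxE in \<open>auto simp: PL_def\<close>)
  qed
  then obtain h where h1: "\<And>n. det (h n) = 1"
    and hb: "\<And>n y. cmod (net_discriminant A1 A2 A3 (h n *v y)) \<le> C * ((cmod (PL n (E n))) powr (1/3) * (\<Sum>j\<in>UNIV. cmod (y$j))) ^ 4"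
    by metis
  show ?thesis unfolding quartic_unstable_def
  proof (intro exI conjI allI)
    show "\<And>n. det (h n) = 1" by (rule h1)
    fix y :: "complex^3"
    show "(\<lambda>n. net_discriminant A1 A2 A3 (h n *v y)) \<longlonglongrightarrow> 0"
    proof (rule Lim_null_comparison)
      show "\<forall>\<^sub>F n in sequentially. norm (net_discriminant A1 A2 A3 (h n *v y)) \<le> C * ((cmod (PL n (E n))) powr (1/3) * (\<Sum>j\<in>UNIV. cmod (y$j))) ^ 4"
        using hb by simp
      have "(\<lambda>n. (cmod (PL n (E n))) powr (1/3)) \<longlonglongrightarrow> 0"
        by (rule tendsto_zero_powrI[OF m0 tendsto_const]) simp_all
      then have "(\<lambda>n. C * ((cmod (PL n (E n))) powr (1/3) * (\<Sum>j\<in>UNIV. cmod (y$j))) ^ 4) \<longlonglongrightarrow> C * (0 * (\<Sum>j\<in>UNIV. cmod (y$j))) ^ 4"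
        by (intro tendsto_intros)
      then show "(\<lambda>n. C * ((cmod (PL n (E n))) powr (1/3) * (\<Sum>j\<in>UNIV. cmod (y$j))) ^ 4) \<longlonglongrightarrow> 0" by simp
    qed
  qed
qed

theorem corollaryA4:
  fixes A1 A2 A3 :: "complex^4^4"
  assumes sym: "transpose A1 = A1" "transpose A2 = A2" "transpose A3 = A3"
    and net: "\<forall>a b c :: complex. cmat a A1 + cmat b A2 + cmat c A3 = 0 \<longrightarrow> a = 0 \<and> b = 0 \<and> c = 0"
    and proper: "net_discriminant A1 A2 A3 \<noteq> (\<lambda>_. 0)"
  shows "(reduced_form 4 (net_discriminant A1 A2 A3) \<and> quartic_unstable (net_discriminant A1 A2 A3)
            \<longrightarrow> has_triple_point (net_discriminant A1 A2 A3)
                \<or> cubic_plus_inflectional_line (net_discriminant A1 A2 A3))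
       \<and> (quartic_unstable (net_discriminant A1 A2 A3) \<and> \<not> reduced_form 4 (net_discriminant A1 A2 A3)
            \<longrightarrow> \<not> double_smooth_conic (net_discriminant A1 A2 A3))
       \<and> (quartic_semistable (net_discriminant A1 A2 A3) \<longrightarrow> net_semistable A1 A2 A3)"
proof (intro conjI impI)
  have TD: "ternary_form 4 (net_discriminant A1 A2 A3)" unfolding ternary_form_iff by (rule disc_form)
  show "has_triple_point (net_discriminant A1 A2 A3) \<or> cubic_plus_inflectional_line (net_discriminant A1 A2 A3)"
    if "reduced_form 4 (net_discriminant A1 A2 A3) \<and> quartic_unstable (net_discriminant A1 A2 A3)"
    using core_unstable[OF TD] that by blast
  show "\<not> double_smooth_conic (net_discriminant A1 A2 A3)"
    if "quartic_unstable (net_discriminant A1 A2 A3) \<and> \<not> reduced_form 4 (net_discriminant A1 A2 A3)"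
  proof
    assume "double_smooth_conic (net_discriminant A1 A2 A3)"
    then obtain Q where Q2: "ternary_form 2 Q" and sm: "smooth_curve Q" and FQ: "\<forall>x. net_discriminant A1 A2 A3 x = (Q x)^2"
      unfolding double_smooth_conic_def by blast
    have "has_triple_point (net_discriminant A1 A2 A3) \<or> cubic_plus_inflectional_line (net_discriminant A1 A2 A3)"
      using core_unstable[OF TD] that by blast
    then show False using part2_core[OF Q2 sm FQ] by blast
  qed
  show "net_semistable A1 A2 A3" if "quartic_semistable (net_discriminant A1 A2 A3)"
    using that net_to_disc[OF net] unfolding quartic_semistable_def net_semistable_def by blast
qed


end
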